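(* Let $p\ge2$ and $\mathcal F\in(\mathbb R^n\otimes\mathrm S^p\mathbb R^n)\setminus\{0\}$, not of the form $a\otimes^{p+1}u$ with $\|u\|_2=1$, $a\ne0$. Let $\tilde f_k:=\|\mathcal F^{\circ k}\|_\sigma^{(p-1)/(p^k-1)}$. Then $\tilde f_k\le\|\mathcal F\|_\sigma$ for all $k\in\mathbb N$; $\|\mathcal F^{\circ(k+l)}\|_\sigma\le\|\mathcal F^{\circ k}\|_\sigma\|\mathcal F^{\circ l}\|_\sigma^{p^k}$ for all $k,l\in\mathbb N$; for each fixed $m\in\mathbb N$ the sequence $(\tilde f_{m2^l})_{l\ge0}$ is nonincreasing; the limit $\rho_3(\mathcal F):=\lim_{k\to\infty}\tilde f_k$ exists; and $\rho_3(\mathcal F)\le\rho_2(\mathcal F)$. Moreover, for $k,l\in\mathbb N$, equality holds in the second inequality iff either $\mathcal F^{\circ l}=0$, or there exists $x^\star\in\mathbb R^n$ with $\|x^\star\|_2=1$, $\|\mathbf F^{\circ l}(x^\star)\|_2=\|\mathcal F^{\circ l}\|_\sigma$, and $\|\mathbf F^{\circ k}(y)\|_2=\|\mathcal F^{\circ k}\|_\sigma$ for $y=\|\mathcal F^{\circ l}\|_\sigma^{-1}\mathbf F^{\circ l}(x^\star)$.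
   Context: Tensors carry the entrywise inner product, the Hilbert–Schmidt norm $\|\cdot\|_{HS}$ and the spectral norm $\|\mathcal T\|_\sigma=\max|\langle\mathcal T,x_1\otimes\cdots\otimes x_d\rangle|$ over unit vectors. $\mathbb R^n\otimes\mathrm S^p\mathbb R^n$ denotes tensors $\mathcal F=[f_{i_1,\dots,i_{p+1}}]$ in $\mathbb R^n\otimes(\bigotimes^p\mathbb R^n)$ symmetric in the last $p$ indices; it corresponds bijectively to the homogeneous polynomial map $\mathbf F:\mathbb R^n\to\mathbb R^n$ of degree $p$, $\mathbf F(x)=\mathcal F\times\otimes^px$, i.e. $F_i(x)=\sum_{i_2,\dots,i_{p+1}}f_{i,i_2,\dots,i_{p+1}}x_{i_2}\cdots x_{i_{p+1}}$; one has $\|\mathcal F\|_\sigma=\max_{x\ne0}\|\mathbf F(x)\|_2/\|x\|_2^p$. The composition $\mathcal G\circ\mathcal F$ of $\mathcal F\in\mathbb R^m\otimes\mathrm S^p\mathbb R^n$, $\mathcal G\in\mathbb R^l\otimes\mathrm S^q\mathbb R^m$ is the unique element of $\mathbb R^l\otimes\mathrm S^{pq}\mathbb R^n$ whose map is $\mathbf G\circ\mathbf F$; $\mathcal F^{\circ k}$ is the $k$-fold composition, corresponding to the iterate $\mathbf F^{\circ k}$. $\rho_2(\mathcal F):=\lim_{k\to\infty}\|\mathcal F^{\circ k}\|_{HS}^{(p-1)/(p^k-1)}$ (this limit exists). *)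

theory Defs
  imports "HOL-Analysis.Analysis"
begin

text \<open>A tensor in R^n (x) S^d R^n is represented as f :: 'n => 'n list => real,
  where f i is is the entry f_{i,is_1,...,is_d} for lists is of length d.
  The dimension n is CARD('n).\<close>

type_synonym 'n ptensor = "'n \<Rightarrow> 'n list \<Rightarrow> real"

definition idx_lists :: "nat \<Rightarrow> ('n::finite) list set" where
  "idx_lists d = {is. length is = d}"

definition sym_tensor :: "nat \<Rightarrow> ('n::finite) ptensor \<Rightarrow> bool" where
  "sym_tensor d f \<longleftrightarrow>
     (\<forall>i is. length is \<noteq> d \<longrightarrow> f i is = 0) \<and>
     (\<forall>i is js. mset is = mset js \<longrightarrow> f i is = f i js)"

definition tensor_map :: "nat \<Rightarrow> ('n::finite) ptensor \<Rightarrow> real^'n \<Rightarrow> real^'n" where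
  "tensor_map d f x = (\<chi> i. \<Sum>is\<in>idx_lists d. f i is * (\<Prod>j<d. x $ (is ! j)))"

definition hs_norm :: "nat \<Rightarrow> ('n::finite) ptensor \<Rightarrow> real" where
  "hs_norm d f = sqrt (\<Sum>i\<in>UNIV. \<Sum>is\<in>idx_lists d. (f i is)\<^sup>2)"

definition spec_norm :: "nat \<Rightarrow> ('n::finite) ptensor \<Rightarrow> real" where
  "spec_norm d f = Sup {\<bar>\<Sum>i\<in>UNIV. \<Sum>is\<in>idx_lists d.
        f i is * y $ i * (\<Prod>j<d. (xs j) $ (is ! j))\<bar> | y xs.
        norm y = 1 \<and> (\<forall>j<d. norm (xs j) = 1)}"

definition titer :: "nat \<Rightarrow> ('n::finite) ptensor \<Rightarrow> nat \<Rightarrow> 'n ptensor" where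
  "titer p f k = (THE h. sym_tensor (p ^ k) h \<and> tensor_map (p ^ k) h = (tensor_map p f ^^ k))"

definition rho2 :: "nat \<Rightarrow> ('n::finite) ptensor \<Rightarrow> real" where
  "rho2 p f = lim (\<lambda>k. hs_norm (p ^ k) (titer p f k) powr ((real p - 1) / (real p ^ k - 1)))"

definition ftilde :: "nat \<Rightarrow> ('n::finite) ptensor \<Rightarrow> nat \<Rightarrow> real" where
  "ftilde p f k = spec_norm (p ^ k) (titer p f k) powr ((real p - 1) / (real p ^ k - 1))"

definition rho3 :: "nat \<Rightarrow> ('n::finite) ptensor \<Rightarrow> real" where
  "rho3 p f = lim (ftilde p f)"

end

theory Submission
  imports Defs "HOL-Analysis.Analysis"
begin


lemma finite_idx_lists[simp]: "finite (idx_lists d :: ('n::finite) list set)"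
proof -
  have "idx_lists d = {xs::'n list. set xs \<subseteq> UNIV \<and> length xs = d}" by (auto simp: idx_lists_def)
  thus ?thesis using finite_lists_length_eq[of "UNIV::'n set" d] by simp
qed

lemma idx_lists_0[simp]: "idx_lists 0 = {[]}" by (auto simp: idx_lists_def)

lemma idx_lists_Suc: "idx_lists (Suc d) = (\<lambda>(a,is). a # is) ` (UNIV \<times> idx_lists d)"
  by (auto simp: idx_lists_def image_iff length_Suc_conv)

lemma sum_idx_lists_Suc:
  "(\<Sum>is\<in>idx_lists (Suc d). (\<phi> is::'b::comm_monoid_add)) = (\<Sum>a\<in>(UNIV::('n::finite) set). \<Sum>is\<in>idx_lists d. \<phi> (a # is))"
proof -
  have inj: "inj_on (\<lambda>(a,is). a # is) (UNIV \<times> idx_lists d :: ('n \<times> 'n list) set)"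
    by (auto simp: inj_on_def)
  have "(\<Sum>is\<in>idx_lists (Suc d). \<phi> is) = (\<Sum>x\<in>UNIV \<times> idx_lists d. \<phi> (fst x # snd x))"
    unfolding idx_lists_Suc by (subst sum.reindex[OF inj]) (simp add: case_prod_unfold)
  also have "\<dots> = (\<Sum>a\<in>UNIV. \<Sum>is\<in>idx_lists d. \<phi> (a # is))"
    by (simp add: sum.cartesian_product case_prod_unfold)
  finally show ?thesis .
qed

lemma KL: "(\<Sum>is\<in>idx_lists d. \<Prod>j<d. g j (is!j)) = (\<Prod>j<d. \<Sum>a\<in>(UNIV::('n::finite) set). (g j a :: real))"
proof (induction d arbitrary: g)
  case 0 thus ?case by simp
next
  case (Suc d)
  have "(\<Sum>is\<in>idx_lists (Suc d). \<Prod>j<Suc d. g j (is!j))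
      = (\<Sum>a\<in>(UNIV::'n set). \<Sum>is\<in>idx_lists d. g 0 a * (\<Prod>j<d. g (Suc j) (is!j)))"
    by (simp add: sum_idx_lists_Suc prod.lessThan_Suc_shift del: prod.lessThan_Suc)
  also have "\<dots> = (\<Sum>a\<in>(UNIV::'n set). g 0 a) * (\<Prod>j<d. \<Sum>a\<in>(UNIV::'n set). g (Suc j) a)"
    by (simp add: sum_distrib_left[symmetric] sum_distrib_right Suc.IH[of "\<lambda>j. g (Suc j)"])
  also have "\<dots> = (\<Prod>j<Suc d. \<Sum>a\<in>(UNIV::'n set). g j a)"
    by (simp add: prod.lessThan_Suc_shift del: prod.lessThan_Suc)
  finally show ?case .
qed

lemma AL: "(\<Sum>is\<in>idx_lists (a+b). (\<phi> is::real)) = (\<Sum>u\<in>idx_lists a. \<Sum>v\<in>idx_lists b. \<phi> (u @ (v::('n::finite) list)))"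
proof (induction a arbitrary: \<phi>)
  case 0 thus ?case by simp
next
  case (Suc a)
  show ?case by (simp add: sum_idx_lists_Suc Suc.IH)
qed

definition chunk :: "nat \<Rightarrow> nat \<Rightarrow> 'a list \<Rightarrow> 'a list" where
  "chunk r t is = take r (drop (t*r) is)"

lemma chunk_0_app: "length u = r \<Longrightarrow> chunk r 0 (u @ v) = u"
  by (simp add: chunk_def)
lemma chunk_Suc_app: "length u = r \<Longrightarrow> chunk r (Suc t) (u @ v) = chunk r t v"
  by (simp add: chunk_def add.commute)

lemma CKL: "(\<Sum>is\<in>idx_lists (q*r). \<Prod>t<q. h t (chunk r t is)) = (\<Prod>t<q. \<Sum>c\<in>idx_lists r. (h t (c::('n::finite) list) :: real))"
proof (induction q arbitrary: h)
  case 0 thus ?case by simp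
next
  case (Suc q)
  have "(\<Sum>is\<in>idx_lists (Suc q*r). \<Prod>t<Suc q. h t (chunk r t is))
     = (\<Sum>u\<in>idx_lists r. \<Sum>v\<in>idx_lists (q*r). \<Prod>t<Suc q. h t (chunk r t (u @ v)))"
    by (simp add: AL)
  also have "\<dots> = (\<Sum>u\<in>idx_lists r. \<Sum>v\<in>idx_lists (q*r). h 0 u * (\<Prod>t<q. h (Suc t) (chunk r t v)))"
    apply (intro sum.cong refl)
    apply (subst prod.lessThan_Suc_shift)
    apply (clarsimp simp: idx_lists_def chunk_0_app chunk_Suc_app simp del: prod.lessThan_Suc)
    done
  also have "\<dots> = (\<Sum>u\<in>idx_lists r. h 0 u) * (\<Prod>t<q. \<Sum>c\<in>idx_lists r. h (Suc t) c)"
    by (simp add: sum_distrib_left[symmetric] sum_distrib_right Suc.IH[of "\<lambda>t. h (Suc t)"])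
  also have "\<dots> = (\<Prod>t<Suc q. \<Sum>c\<in>idx_lists r. h t c)"
    by (simp add: prod.lessThan_Suc_shift del: prod.lessThan_Suc)
  finally show ?case .
qed

definition mon :: "real^'n \<Rightarrow> 'n list \<Rightarrow> real" where
  "mon x is = prod_list (map (\<lambda>a. x $ a) is)"

lemma mon_Cons[simp]: "mon x (a # is) = x $ a * mon x is" by (simp add: mon_def)
lemma mon_Nil[simp]: "mon x [] = 1" by (simp add: mon_def)
lemma mon_app: "mon x (u @ v) = mon x u * mon x v" by (simp add: mon_def)

lemma prod_nth_mon: "length is = d \<Longrightarrow> (\<Prod>j<d. x $ (is!j)) = mon x is"
proof (induction "is" arbitrary: d)
  case Nil thus ?case by simp
next
  case (Cons a "is")
  then obtain d' where d: "d = Suc d'" "length is = d'" by auto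
  thus ?case using Cons.IH[OF d(2)] by (simp add: prod.lessThan_Suc_shift del: prod.lessThan_Suc)
qed

lemma tm_mon: "tensor_map d T x $ i = (\<Sum>is\<in>idx_lists d. T i is * mon x is)"
  unfolding tensor_map_def by (auto intro!: sum.cong simp: prod_nth_mon idx_lists_def)

lemma mon_chunks: "length is = q*r \<Longrightarrow> mon x is = (\<Prod>t<q. mon x (chunk r t is))"
proof (induction q arbitrary: "is")
  case 0 thus ?case by simp
next
  case (Suc q)
  define u v where "u = take r is" and "v = drop r is"
  have is_eq: "is = u @ v" and lu: "length u = r" and lv: "length v = q*r"
    using Suc.prems by (auto simp: u_def v_def)
  show ?case unfolding is_eq
    apply (subst prod.lessThan_Suc_shift)
    apply (simp add: mon_app chunk_0_app[OF lu] chunk_Suc_app[OF lu] Suc.IH[OF lv] del: prod.lessThan_Suc)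
    done
qed


definition cls :: "'n list \<Rightarrow> 'n list set" where
  "cls is = {ks. mset ks = mset is}"

lemma cls_sub: "cls is \<subseteq> idx_lists (length is)"
  unfolding cls_def idx_lists_def by (auto dest: mset_eq_length)

lemma finite_cls[simp]: "finite (cls (is::('n::finite) list))"
  using cls_sub finite_idx_lists finite_subset by blast

lemma cls_self[simp]: "is \<in> cls is" by (simp add: cls_def)

lemma card_cls_pos: "card (cls (is::('n::finite) list)) > 0"
  using finite_cls cls_self card_gt_0_iff by blast

lemma cls_eq: "ks \<in> cls is \<Longrightarrow> cls ks = cls is" by (simp add: cls_def)

lemma cls_L: "is \<in> idx_lists d \<Longrightarrow> cls is = {ks \<in> idx_lists d. mset ks = mset is}"
  using cls_sub[of "is"] by (auto simp: cls_def idx_lists_def)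

lemma SW:
  fixes \<phi> :: "('n::finite) list \<Rightarrow> real"
  shows "(\<Sum>is\<in>idx_lists d. (\<Sum>ks\<in>cls is. \<phi> ks) / real (card (cls is))) = (\<Sum>is\<in>idx_lists d. (\<phi> is :: real))"
  (is "?L = ?R")
proof -
  have "?L = (\<Sum>is\<in>idx_lists d. \<Sum>ks\<in>{ks \<in> idx_lists d. mset is = mset ks}. \<phi> ks / real (card (cls ks)))"
  proof (intro sum.cong refl)
    fix "is" :: "'n list" assume "is \<in> idx_lists (d::nat)"
    hence c: "cls is = {ks \<in> idx_lists d. mset is = mset ks}" using cls_L by fastforce
    show "(\<Sum>ks\<in>cls is. \<phi> ks) / real (card (cls is)) =
        (\<Sum>ks\<in>{ks \<in> idx_lists d. mset is = mset ks}. \<phi> ks / real (card (cls ks)))"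
      unfolding sum_divide_distrib c
    proof (intro sum.cong refl)
      fix ks assume "ks \<in> {ks \<in> idx_lists d. mset is = mset ks}"
      hence "cls ks = {ks \<in> idx_lists d. mset is = mset ks}" using c by (auto simp: cls_def)
      thus "\<phi> ks / real (card {ks \<in> idx_lists d. mset is = mset ks}) = \<phi> ks / real (card (cls ks))" by simp
    qed
  qed
  also have "\<dots> = (\<Sum>ks\<in>idx_lists d. \<Sum>is\<in>{is \<in> idx_lists d. mset is = mset ks}. \<phi> ks / real (card (cls ks)))"
    by (rule sum.swap_restrict) auto
  also have "\<dots> = (\<Sum>ks\<in>idx_lists d. \<phi> ks)"
  proof (intro sum.cong refl)
    fix ks :: "'n list" assume ks: "ks \<in> idx_lists (d::nat)"
    have c: "{is \<in> idx_lists d. mset is = mset ks} = cls ks" using cls_L[OF ks] by simp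
    show "(\<Sum>is\<in>{is \<in> idx_lists d. mset is = mset ks}. \<phi> ks / real (card (cls ks))) = \<phi> ks"
      unfolding c using card_cls_pos[of ks] by (simp add: card_gt_0_iff)
  qed
  finally show ?thesis .
qed

definition sym_of :: "nat \<Rightarrow> ('n::finite) ptensor \<Rightarrow> 'n ptensor" where
  "sym_of d T i is = (if length is = d then (\<Sum>ks\<in>cls is. T i ks) / real (card (cls is)) else 0)"

lemma sym_of_sym: "sym_tensor d (sym_of d T)"
  unfolding sym_tensor_def sym_of_def cls_def by (auto dest: mset_eq_length)

lemma mon_mset: "mset ks = mset is \<Longrightarrow> mon x ks = mon x is"
  unfolding mon_def by (metis mset_map prod_mset_prod_list)

lemma sym_of_map:
  fixes T :: "('n::finite) ptensor"
  shows "tensor_map d (sym_of d T) = tensor_map d T"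
proof (rule ext, subst vec_eq_iff, intro allI)
  fix x i
  have "tensor_map d (sym_of d T) x $ i = (\<Sum>is\<in>idx_lists d. (\<Sum>ks\<in>cls is. T i ks * mon x ks) / real (card (cls is)))"
    unfolding tm_mon
  proof (intro sum.cong refl)
    fix "is" :: "'n list" assume "is \<in> idx_lists d"
    hence "length is = d" by (simp add: idx_lists_def)
    thus "sym_of d T i is * mon x is = (\<Sum>ks\<in>cls is. T i ks * mon x ks) / real (card (cls is))"
    proof -
      have "(\<Sum>ks\<in>cls is. T i ks) * mon x is = (\<Sum>ks\<in>cls is. T i ks * mon x ks)"
        unfolding sum_distrib_right
      proof (intro sum.cong refl)
        fix ks assume "ks \<in> cls is"
        hence "mon x ks = mon x is" by (intro mon_mset) (simp add: cls_def)
        thus "T i ks * mon x is = T i ks * mon x ks" by simp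
      qed
      thus ?thesis using \<open>length is = d\<close> by (simp add: sym_of_def)
    qed
  qed
  also have "\<dots> = tensor_map d T x $ i" unfolding tm_mon SW ..
  finally show "tensor_map d (sym_of d T) x $ i = tensor_map d T x $ i" .
qed

lemma sq_sum_le: "finite A \<Longrightarrow> (\<Sum>k\<in>A. a k)\<^sup>2 \<le> real (card A) * (\<Sum>k\<in>A. (a k)\<^sup>2)"
  using Cauchy_Schwarz_ineq_sum[of "\<lambda>_. 1" a A] by simp

lemma sym_of_hs_sq:
  fixes T :: "('n::finite) ptensor"
  shows "(\<Sum>is\<in>idx_lists d. (sym_of d T i is)\<^sup>2) \<le> (\<Sum>is\<in>idx_lists d. (T i is)\<^sup>2)"
proof -
  have "(\<Sum>is\<in>idx_lists d. (sym_of d T i is)\<^sup>2) \<le> (\<Sum>is\<in>idx_lists d. (\<Sum>ks\<in>cls is. (T i ks)\<^sup>2) / real (card (cls is)))"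
  proof (intro sum_mono)
    fix "is" :: "'n list" assume "is \<in> idx_lists d"
    hence l: "length is = d" by (simp add: idx_lists_def)
    have cp: "real (card (cls is)) > 0" using card_cls_pos by simp
    have "(sym_of d T i is)\<^sup>2 = (\<Sum>ks\<in>cls is. T i ks)\<^sup>2 / (real (card (cls is)))\<^sup>2"
      by (simp add: sym_of_def l power_divide)
    also have "\<dots> \<le> real (card (cls is)) * (\<Sum>ks\<in>cls is. (T i ks)\<^sup>2) / (real (card (cls is)))\<^sup>2"
      by (intro divide_right_mono sq_sum_le) auto
    also have "\<dots> = (\<Sum>ks\<in>cls is. (T i ks)\<^sup>2) / real (card (cls is))"
      using cp by (simp add: power2_eq_square)
    finally show "(sym_of d T i is)\<^sup>2 \<le> (\<Sum>ks\<in>cls is. (T i ks)\<^sup>2) / real (card (cls is))" .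
  qed
  also have "\<dots> = (\<Sum>is\<in>idx_lists d. (T i is)\<^sup>2)" by (rule SW)
  finally show ?thesis .
qed

lemma hs_sym_of: "hs_norm d (sym_of d T) \<le> hs_norm d T"
  unfolding hs_norm_def by (intro real_sqrt_le_mono sum_mono sym_of_hs_sq)



lemma symD1: "sym_tensor d T \<Longrightarrow> length is \<noteq> d \<Longrightarrow> T i is = 0"
  unfolding sym_tensor_def by blast
lemma symD2: "sym_tensor d T \<Longrightarrow> mset is = mset js \<Longrightarrow> T i is = T i js"
  unfolding sym_tensor_def by blast
lemma symI: "(\<And>i is. length is \<noteq> d \<Longrightarrow> T i is = 0) \<Longrightarrow> (\<And>i is js. mset is = mset js \<Longrightarrow> T i is = T i js) \<Longrightarrow> sym_tensor d T"
  unfolding sym_tensor_def by blast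


lemma digits_unique:
  fixes c c' :: "nat \<Rightarrow> nat"
  assumes "\<forall>k. c k < B" "\<forall>k. c' k < B" "(\<Sum>k<N. c k * B^k) = (\<Sum>k<N. c' k * B^k)" "k < N"
  shows "c k = c' k"
  using assms
proof (induction N arbitrary: c c' k)
  case 0 thus ?case by simp
next
  case (Suc N)
  have B: "B > 0" using Suc.prems(1) by (metis not_less0 not_gr_zero)
  have ex: "(\<Sum>k<Suc N. c k * B^k) = c 0 + B * (\<Sum>k<N. c (Suc k) * B^k)" for c :: "nat \<Rightarrow> nat"
    by (simp add: sum.lessThan_Suc_shift sum_distrib_left mult.assoc mult.left_commute del: sum.lessThan_Suc)
  have eq: "c 0 + B * (\<Sum>k<N. c (Suc k) * B^k) = c' 0 + B * (\<Sum>k<N. c' (Suc k) * B^k)"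
    using Suc.prems(3) ex[of c] ex[of c'] by simp
  have c0: "c 0 = c' 0"
  proof -
    have "(c 0 + B * (\<Sum>k<N. c (Suc k) * B^k)) mod B = c 0" using Suc.prems(1) by simp
    moreover have "(c' 0 + B * (\<Sum>k<N. c' (Suc k) * B^k)) mod B = c' 0" using Suc.prems(2) by simp
    ultimately show ?thesis using eq by simp
  qed
  have rest: "(\<Sum>k<N. c (Suc k) * B^k) = (\<Sum>k<N. c' (Suc k) * B^k)"
    using eq c0 B by simp
  show ?case
  proof (cases k)
    case 0 thus ?thesis using c0 by simp
  next
    case (Suc k')
    thus ?thesis using Suc.IH[of "\<lambda>k. c (Suc k)" "\<lambda>k. c' (Suc k)" k'] Suc.prems rest by auto
  qed
qed

lemma sum_list_count: "sum_list (map w is) = (\<Sum>a\<in>(UNIV::('n::finite) set). count (mset is) a * (w a :: nat))"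
proof (induction "is")
  case Nil thus ?case by simp
next
  case (Cons b "is")
  have "(\<Sum>a\<in>UNIV. count (mset (b # is)) a * w a) = (\<Sum>a\<in>UNIV. (if a = b then w a else 0) + count (mset is) a * w a)"
    by (intro sum.cong) (auto simp: algebra_simps)
  also have "\<dots> = w b + (\<Sum>a\<in>UNIV. count (mset is) a * w a)" by (simp add: sum.distrib)
  finally show ?case using Cons by simp
qed

lemma mset_from_weights:
  fixes "is" ks :: "('n::finite) list"
  assumes l: "length is = d" "length ks = d"
    and g: "inj (g :: 'n \<Rightarrow> nat)"
    and e: "sum_list (map (\<lambda>a. (Suc d)^(g a)) is) = sum_list (map (\<lambda>a. (Suc d)^(g a)) ks)"
  shows "mset is = mset ks"
proof -
  define M where "M = Suc (Max (range g))"
  have gM: "g a < M" for a unfolding M_def by (simp add: le_imp_less_Suc)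
  define c where "c xs k = (\<Sum>a\<in>{a\<in>UNIV. g a = k}. count (mset xs) a)" for xs :: "'n list" and k
  have rep: "sum_list (map (\<lambda>a. (Suc d)^(g a)) xs) = (\<Sum>k<M. c xs k * (Suc d)^k)" for xs
  proof -
    have "sum_list (map (\<lambda>a. (Suc d)^(g a)) xs) = (\<Sum>a\<in>UNIV. count (mset xs) a * (Suc d)^(g a))"
      by (rule sum_list_count)
    also have "\<dots> = (\<Sum>k\<in>{..<M}. \<Sum>a\<in>{a\<in>UNIV. g a = k}. count (mset xs) a * (Suc d)^(g a))"
      by (rule sum.group[symmetric]) (auto simp: gM)
    also have "\<dots> = (\<Sum>k<M. c xs k * (Suc d)^k)"
      unfolding c_def sum_distrib_right by (intro sum.cong refl) auto
    finally show ?thesis .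
  qed
  have cb: "c xs k < Suc d" if "length xs = d" for xs k
  proof -
    have "c xs k \<le> (\<Sum>a\<in>UNIV. count (mset xs) a)" unfolding c_def by (intro sum_mono2) auto
    also have "\<dots> = length xs" using sum_list_count[of "\<lambda>_. 1" xs] by (simp add: sum_list_triv)
    finally show ?thesis using that by simp
  qed
  have ck: "c is k = c ks k" if "k < M" for k
    using digits_unique[of "c is" "Suc d" "c ks" M k] cb l e rep that by auto
  have cg: "c xs (g a) = count (mset xs) a" for xs a
  proof -
    have "{a'\<in>UNIV. g a' = g a} = {a}" using g by (auto simp: inj_def)
    thus ?thesis by (simp add: c_def)
  qed
  show ?thesis by (rule multiset_eqI) (metis cg ck gM)
qed

lemma mon_pow: "mon (\<chi> a. t ^ (w a)) is = t ^ sum_list (map w is)"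
  by (induction "is") (auto simp: power_add)

lemma sym_zero:
  assumes s: "sym_tensor d T" and z: "\<And>x. tensor_map d T x = 0"
  shows "T = (\<lambda>_ _. 0)"
proof (intro ext)
  fix i and "is" :: "('a::finite) list"
  show "T i is = 0"
  proof (cases "length is = d")
    case False thus ?thesis using s by (simp add: symD1)
  next
    case True
    obtain g :: "'a \<Rightarrow> nat" where g: "inj g"
      using countable_finite[of "UNIV::'a set"] by (auto simp: countable_def)
    define e where "e xs = sum_list (map (\<lambda>a. (Suc d)^(g a)) xs)" for xs
    define N where "N = Max (e ` idx_lists d)"
    have eN: "e ` idx_lists d \<subseteq> {..N}" unfolding N_def by auto
    define cf where "cf m = (\<Sum>ks\<in>{ks\<in>idx_lists d. e ks = m}. T i ks)" for m
    have poly: "(\<Sum>m\<le>N. cf m * t^m) = 0" for t :: real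
    proof -
      have "0 = tensor_map d T (\<chi> a. t ^ ((Suc d)^(g a))) $ i" using z by simp
      also have "\<dots> = (\<Sum>ks\<in>idx_lists d. T i ks * t ^ e ks)" unfolding tm_mon mon_pow e_def ..
      also have "\<dots> = (\<Sum>m\<in>{..N}. \<Sum>ks\<in>{ks\<in>idx_lists d. e ks = m}. T i ks * t ^ e ks)"
        by (rule sum.group[symmetric]) (use eN in auto)
      also have "\<dots> = (\<Sum>m\<le>N. cf m * t^m)"
        unfolding cf_def sum_distrib_right by (intro sum.cong refl) auto
      finally show ?thesis by simp
    qed
    have isL: "is \<in> idx_lists d" using True by (simp add: idx_lists_def)
    have "cf (e is) = 0" using polyfun_eq_0[of cf N] poly eN isL by blast
    moreover have "{ks\<in>idx_lists d. e ks = e is} = cls is"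
    proof (intro set_eqI iffI)
      fix ks assume "ks \<in> {ks\<in>idx_lists d. e ks = e is}"
      hence "length ks = d" "e ks = e is" by (auto simp: idx_lists_def)
      hence "mset ks = mset is" using mset_from_weights[OF _ True g] unfolding e_def by blast
      thus "ks \<in> cls is" by (simp add: cls_def)
    next
      fix ks assume "ks \<in> cls is" hence m: "mset ks = mset is" by (simp add: cls_def)
      hence "length ks = d" using True mset_eq_length by metis
      moreover have "e ks = e is" unfolding e_def by (metis m mset_map sum_mset_sum_list)
      ultimately show "ks \<in> {ks\<in>idx_lists d. e ks = e is}" by (simp add: idx_lists_def)
    qed
    moreover have "(\<Sum>ks\<in>cls is. T i ks) = real (card (cls is)) * T i is"
    proof -
      have "(\<Sum>ks\<in>cls is. T i ks) = (\<Sum>ks\<in>cls is. T i is)"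
        by (intro sum.cong refl) (rule symD2[OF s], simp add: cls_def)
      thus ?thesis by simp
    qed
    ultimately show ?thesis using card_cls_pos[of "is"] by (simp add: cf_def card_gt_0_iff)
  qed
qed

lemma tm_diff: "tensor_map d (\<lambda>i is. T i is - U i is) x = tensor_map d T x - tensor_map d U x"
  by (simp add: vec_eq_iff tm_mon left_diff_distrib sum_subtractf)

lemma sym_unique:
  assumes "sym_tensor d T" "sym_tensor d U" "tensor_map d T = tensor_map d U"
  shows "T = U"
proof -
  have "sym_tensor d (\<lambda>i is. T i is - U i is)"
  proof (rule symI)
    fix i "is" js assume "mset is = mset (js::'a list)"
    thus "T i is - U i is = T i js - U i js" using symD2[OF assms(1)] symD2[OF assms(2)] by metis
  qed (simp add: symD1[OF assms(1)] symD1[OF assms(2)])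
  moreover have "tensor_map d (\<lambda>i is. T i is - U i is) x = 0" for x using assms(3) by (simp add: tm_diff)
  ultimately have "(\<lambda>i is. T i is - U i is) = (\<lambda>_ _. 0)" by (rule sym_zero)
  hence "T i is - U i is = 0" for i "is" by (metis (no_types))
  thus ?thesis by (intro ext) simp
qed

definition compU :: "nat \<Rightarrow> nat \<Rightarrow> ('n::finite) ptensor \<Rightarrow> 'n ptensor \<Rightarrow> 'n ptensor" where
  "compU q r G F i is = (if length is = q*r then
      (\<Sum>js\<in>idx_lists q. G i js * (\<Prod>t<q. F (js!t) (chunk r t is))) else 0)"

lemma compU_map:
  fixes G F :: "('n::finite) ptensor"
  shows "tensor_map (q*r) (compU q r G F) x = tensor_map q G (tensor_map r F x)"
proof (subst vec_eq_iff, intro allI)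
  fix i
  have "tensor_map (q*r) (compU q r G F) x $ i
      = (\<Sum>is\<in>idx_lists (q*r). \<Sum>js\<in>idx_lists q. G i js * (\<Prod>t<q. F (js!t) (chunk r t is) * mon x (chunk r t is)))"
    unfolding tm_mon
  proof (intro sum.cong refl)
    fix "is" :: "'n list" assume "is \<in> idx_lists (q*r)"
    hence l: "length is = q*r" by (simp add: idx_lists_def)
    show "compU q r G F i is * mon x is = (\<Sum>js\<in>idx_lists q. G i js * (\<Prod>t<q. F (js!t) (chunk r t is) * mon x (chunk r t is)))"
      unfolding compU_def using l by (simp add: sum_distrib_right prod.distrib mon_chunks[OF l] mult.assoc)
  qed
  also have "\<dots> = (\<Sum>js\<in>idx_lists q. G i js * (\<Sum>is\<in>idx_lists (q*r). \<Prod>t<q. F (js!t) (chunk r t is) * mon x (chunk r t is)))"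
    by (subst sum.swap) (simp add: sum_distrib_left)
  also have "\<dots> = (\<Sum>js\<in>idx_lists q. G i js * (\<Prod>t<q. tensor_map r F x $ (js!t)))"
  proof (intro sum.cong refl)
    fix js
    show "G i js * (\<Sum>is\<in>idx_lists (q*r). \<Prod>t<q. F (js!t) (chunk r t is) * mon x (chunk r t is)) = G i js * (\<Prod>t<q. tensor_map r F x $ (js!t))"
      using CKL[where q=q and r=r and h="\<lambda>t c. F (js!t) c * mon x c"] by (simp add: tm_mon)
  qed
  also have "\<dots> = tensor_map q G (tensor_map r F x) $ i" unfolding tensor_map_def by simp
  finally show "tensor_map (q*r) (compU q r G F) x $ i = tensor_map q G (tensor_map r F x) $ i" .
qed

definition idT :: "('n::finite) ptensor" where "idT i is = (if is = [i] then 1 else 0)"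

lemma idT_sym: "sym_tensor 1 idT"
  unfolding sym_tensor_def idT_def
  by (auto simp: length_Suc_conv)

lemma idT_map: "tensor_map 1 idT = id"
proof (rule ext)
  fix x :: "real^'n"
  show "tensor_map 1 idT x = id x"
  proof (subst vec_eq_iff, intro allI)
    fix i
    have "tensor_map 1 idT x $ i = (\<Sum>a\<in>UNIV. \<Sum>is\<in>idx_lists 0. idT i (a # is) * mon x (a # is))"
      unfolding tm_mon by (simp add: sum_idx_lists_Suc[where d=0, simplified])
    also have "\<dots> = (\<Sum>a\<in>UNIV. if a = i then x $ a else 0)"
      by (intro sum.cong) (auto simp: idT_def)
    finally show "tensor_map 1 idT x $ i = id x $ i" by simp
  qed
qed

lemma titer_ex: "\<exists>h. sym_tensor (p^k) h \<and> tensor_map (p^k) h = (tensor_map p (f::('n::finite) ptensor) ^^ k)"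
proof (induction k)
  case 0 thus ?case using idT_sym idT_map by (intro exI[of _ idT]) (simp add: id_def)
next
  case (Suc k)
  then obtain h where h: "sym_tensor (p^k) h" "tensor_map (p^k) h = (tensor_map p f ^^ k)" by blast
  let ?h = "sym_of (p^k*p) (compU (p^k) p h f)"
  have "tensor_map (p^k*p) ?h = (tensor_map p f ^^ Suc k)"
    unfolding sym_of_map by (rule ext) (simp add: compU_map h(2) funpow_swap1)
  moreover have pk: "p^Suc k = p^k*p" by simp
  ultimately show ?case unfolding pk using sym_of_sym by (intro exI[of _ ?h]) (simp add: comp_def)
qed

lemma titer_spec: "sym_tensor (p^k) (titer p f k) \<and> tensor_map (p^k) (titer p f k) = (tensor_map p f ^^ k)"
proof -
  have "\<exists>!h. sym_tensor (p^k) h \<and> tensor_map (p^k) h = (tensor_map p f ^^ k)"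
    using titer_ex sym_unique by metis
  thus ?thesis unfolding titer_def by (rule theI')
qed

lemma titer_sym: "sym_tensor (p^k) (titer p f k)" using titer_spec by blast
lemma titer_map: "tensor_map (p^k) (titer p f k) = (tensor_map p f ^^ k)" using titer_spec by blast

lemma titer_comp:
  "titer p f (k+l) = sym_of (p^k*p^l) (compU (p^k) (p^l) (titer p f k) (titer p f l))"
proof (rule sym_unique[of "p^(k+l)"])
  show "sym_tensor (p^(k+l)) (titer p f (k+l))" by (rule titer_sym)
  show "sym_tensor (p^(k+l)) (sym_of (p^k*p^l) (compU (p^k) (p^l) (titer p f k) (titer p f l)))"
    using sym_of_sym by (simp add: power_add)
  show "tensor_map (p^(k+l)) (titer p f (k+l)) = tensor_map (p^(k+l)) (sym_of (p^k*p^l) (compU (p^k) (p^l) (titer p f k) (titer p f l)))"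
    unfolding power_add sym_of_map
    by (rule ext) (simp add: compU_map titer_map titer_map[of p "k+l" f, unfolded power_add] funpow_add)
qed


lemma hs_sq: "(hs_norm d T)\<^sup>2 = (\<Sum>i\<in>UNIV. \<Sum>is\<in>idx_lists d. (T i is)\<^sup>2)"
  unfolding hs_norm_def by (rule real_sqrt_pow2) (intro sum_nonneg, simp)

lemma hs_nonneg: "hs_norm d T \<ge> 0" unfolding hs_norm_def by (intro real_sqrt_ge_zero sum_nonneg) simp

lemma compU_hs_sq:
  fixes G F :: "('n::finite) ptensor"
  shows "(hs_norm (q*r) (compU q r G F))\<^sup>2 \<le> (hs_norm q G)\<^sup>2 * ((hs_norm r F)\<^sup>2)^q"
proof -
  define P where "P js is = (\<Prod>t<q. F (js!t) (chunk r t is))" for js "is" :: "'n list"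
  define w where "w j = (\<Sum>c\<in>idx_lists r. (F j c)\<^sup>2)" for j
  have "(hs_norm (q*r) (compU q r G F))\<^sup>2 = (\<Sum>i\<in>UNIV. \<Sum>is\<in>idx_lists (q*r). (\<Sum>js\<in>idx_lists q. G i js * P js is)\<^sup>2)"
    unfolding hs_sq by (intro sum.cong refl) (simp add: compU_def P_def idx_lists_def)
  also have "\<dots> \<le> (\<Sum>i\<in>UNIV. \<Sum>is\<in>idx_lists (q*r). (\<Sum>js\<in>idx_lists q. (G i js)\<^sup>2) * (\<Sum>js\<in>idx_lists q. (P js is)\<^sup>2))"
    by (intro sum_mono Cauchy_Schwarz_ineq_sum)
  also have "\<dots> = (\<Sum>i\<in>UNIV. (\<Sum>js\<in>idx_lists q. (G i js)\<^sup>2) * (\<Sum>js\<in>idx_lists q. \<Sum>is\<in>idx_lists (q*r). (P js is)\<^sup>2))"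
    by (simp only: sum_distrib_left sum.swap[where A="idx_lists (q*r)" and B="idx_lists q"])
  also have "(\<Sum>js\<in>idx_lists q. \<Sum>is\<in>idx_lists (q*r). (P js is)\<^sup>2) = (\<Sum>js\<in>idx_lists q. \<Prod>t<q. w (js!t))"
  proof (intro sum.cong refl)
    fix js :: "'n list"
    show "(\<Sum>is\<in>idx_lists (q*r). (P js is)\<^sup>2) = (\<Prod>t<q. w (js!t))"
      unfolding P_def w_def power2_eq_square prod.distrib[symmetric]
      by (rule CKL[where h="\<lambda>t c. F (js!t) c * F (js!t) c"])
  qed
  also have "\<dots> = (\<Sum>j\<in>UNIV. w j)^q" using KL[where g="\<lambda>t a. w a" and d=q] by simp
  also have "(\<Sum>j\<in>UNIV. w j) = (hs_norm r F)\<^sup>2" unfolding hs_sq w_def ..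
  finally show ?thesis unfolding hs_sq by (simp add: sum_distrib_right)
qed

lemma compU_hs: "hs_norm (q*r) (compU q r G F) \<le> hs_norm q G * (hs_norm r F)^q"
proof -
  have "(hs_norm (q*r) (compU q r G F))\<^sup>2 \<le> (hs_norm q G * (hs_norm r F)^q)\<^sup>2"
  proof -
    have e: "((hs_norm r F)\<^sup>2)^q = ((hs_norm r F)^q)\<^sup>2" by (simp only: power_mult[symmetric] mult.commute)
    show ?thesis using compU_hs_sq[of q r G F] unfolding e power_mult_distrib .
  qed
  moreover have "0 \<le> hs_norm q G * (hs_norm r F)^q" by (intro mult_nonneg_nonneg zero_le_power hs_nonneg)
  ultimately show ?thesis by (rule power2_le_imp_le)
qed

lemma titer_hs: "hs_norm (p^(k+l)) (titer p f (k+l)) \<le> hs_norm (p^k) (titer p f k) * (hs_norm (p^l) (titer p f l))^(p^k)"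
proof -
  have "hs_norm (p^(k+l)) (titer p f (k+l)) = hs_norm (p^k*p^l) (sym_of (p^k*p^l) (compU (p^k) (p^l) (titer p f k) (titer p f l)))"
    by (simp add: titer_comp power_add)
  also have "\<dots> \<le> hs_norm (p^k*p^l) (compU (p^k) (p^l) (titer p f k) (titer p f l))" by (rule hs_sym_of)
  also have "\<dots> \<le> hs_norm (p^k) (titer p f k) * (hs_norm (p^l) (titer p f l))^(p^k)" by (rule compU_hs)
  finally show ?thesis .
qed


definition MS :: "nat \<Rightarrow> (('n::finite) list \<Rightarrow> real) \<Rightarrow> (nat \<Rightarrow> real^'n) \<Rightarrow> real" where
  "MS d S xs = (\<Sum>is\<in>idx_lists d. S is * (\<Prod>j<d. xs j $ (is!j)))"

lemma MS_upd:
  assumes "c < d"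
  shows "MS d S (xs(c:=a)) = (\<Sum>is\<in>idx_lists d. S is * (a $ (is!c) * (\<Prod>j\<in>{..<d}-{c}. xs j $ (is!j))))"
  unfolding MS_def
proof (intro sum.cong refl arg_cong2[where f="(*)"])
  fix "is" :: "'a list"
  have "(\<Prod>j<d. (xs(c:=a)) j $ (is!j)) = (xs(c:=a)) c $ (is!c) * (\<Prod>j\<in>{..<d}-{c}. (xs(c:=a)) j $ (is!j))"
    using assms by (intro prod.remove) auto
  also have "(\<Prod>j\<in>{..<d}-{c}. (xs(c:=a)) j $ (is!j)) = (\<Prod>j\<in>{..<d}-{c}. xs j $ (is!j))"
    by (intro prod.cong) auto
  finally show "(\<Prod>j<d. (xs(c:=a)) j $ (is!j)) = a $ (is!c) * (\<Prod>j\<in>{..<d}-{c}. xs j $ (is!j))" by simp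
qed

lemma MS_lin:
  assumes "c < d"
  shows "MS d S (xs(c := r *\<^sub>R a + r' *\<^sub>R b)) = r * MS d S (xs(c:=a)) + r' * MS d S (xs(c:=b))"
  unfolding MS_upd[OF assms] sum_distrib_left sum.distrib[symmetric]
  by (intro sum.cong refl) (simp add: algebra_simps)

lemma MS_triv: "c < d \<Longrightarrow> MS d S (xs(c := xs c)) = MS d S xs" by simp

definition sw :: "nat \<Rightarrow> nat \<Rightarrow> nat \<Rightarrow> nat" where
  "sw a b m = (if m = a then b else if m = b then a else m)"

lemma sw_sw[simp]: "sw a b (sw a b m) = m" by (simp add: sw_def)
lemma sw_less: "a < d \<Longrightarrow> b < d \<Longrightarrow> m < d \<Longrightarrow> sw a b m < d" by (simp add: sw_def)

definition swl :: "nat \<Rightarrow> nat \<Rightarrow> 'a list \<Rightarrow> 'a list" where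
  "swl a b is = is[b := is!a, a := is!b]"

lemma swl_len[simp]: "length (swl a b is) = length is" by (simp add: swl_def)
lemma swl_nth: "a < length is \<Longrightarrow> b < length is \<Longrightarrow> m < length is \<Longrightarrow> swl a b is ! m = is ! sw a b m"
  by (auto simp: swl_def sw_def nth_list_update)
lemma swl_swl: "a < length is \<Longrightarrow> b < length is \<Longrightarrow> swl a b (swl a b is) = is"
  by (intro nth_equalityI) (auto simp: swl_nth sw_less)
lemma swl_mset: "a < length is \<Longrightarrow> b < length is \<Longrightarrow> mset (swl a b is) = mset is"
  unfolding swl_def by (rule mset_swap)

lemma MS_swap:
  assumes ab: "a < d" "b < d" and S: "\<And>is js. mset is = mset js \<Longrightarrow> S is = S js"
  shows "MS d S (xs \<circ> sw a b) = MS d S xs"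
proof -
  have "MS d S (xs \<circ> sw a b) = (\<Sum>is\<in>idx_lists d. S (swl a b is) * (\<Prod>j<d. xs (sw a b j) $ (swl a b is ! j)))"
    unfolding MS_def
  proof (rule sum.reindex_bij_witness[where i="swl a b" and j="swl a b"])
    fix "is" :: "'a list" assume "is \<in> idx_lists d"
    hence l: "length is = d" by (simp add: idx_lists_def)
    show "swl a b (swl a b is) = is" using l ab by (simp add: swl_swl)
    show "swl a b is \<in> idx_lists d" using l by (simp add: idx_lists_def)
    show "S (swl a b (swl a b is)) * (\<Prod>j<d. xs (sw a b j) $ (swl a b (swl a b is) ! j)) = S is * (\<Prod>j<d. (xs \<circ> sw a b) j $ (is!j))"
      using l ab by (simp add: swl_swl)
  qed (use ab in \<open>auto simp: idx_lists_def swl_swl\<close>)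
  also have "\<dots> = (\<Sum>is\<in>idx_lists d. S is * (\<Prod>j<d. xs (sw a b j) $ (is ! sw a b j)))"
  proof (intro sum.cong refl arg_cong2[where f="(*)"])
    fix "is" :: "'a list" assume "is \<in> idx_lists d"
    hence l: "length is = d" by (simp add: idx_lists_def)
    show "S (swl a b is) = S is" using l ab by (intro S swl_mset) auto
    show "(\<Prod>j<d. xs (sw a b j) $ (swl a b is ! j)) = (\<Prod>j<d. xs (sw a b j) $ (is ! sw a b j))"
      using l ab by (intro prod.cong refl) (simp add: swl_nth)
  qed
  also have "\<dots> = MS d S xs"
    unfolding MS_def
  proof (intro sum.cong refl arg_cong2[where f="(*)"])
    fix "is" :: "'a list"
    show "(\<Prod>j<d. xs (sw a b j) $ (is ! sw a b j)) = (\<Prod>j<d. xs j $ (is ! j))"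
      by (rule prod.reindex_bij_witness[where i="sw a b" and j="sw a b"]) (auto simp: sw_less ab)
  qed
  finally show ?thesis .
qed

lemma MS_cong: "(\<And>j. j < d \<Longrightarrow> xs j = ys j) \<Longrightarrow> MS d S xs = MS d S ys"
  unfolding MS_def by (intro sum.cong refl arg_cong2[where f="(*)"] prod.cong) auto

lemma MS_cont: "continuous_on UNIV (MS d S)"
  unfolding MS_def
  by (intro continuous_intros continuous_on_component continuous_on_product_coordinates)


definition gm :: "real^'n \<Rightarrow> real^'n^'n" where "gm x = (\<chi> k l. x$k * x$l)"

lemma gm_scale: "gm (r *\<^sub>R x) = r\<^sup>2 *\<^sub>R gm x"
  by (simp add: gm_def vec_eq_iff power2_eq_square)

lemma gm_par: "gm (u+v) + gm (u-v) = 2 *\<^sub>R gm u + 2 *\<^sub>R gm v"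
  by (simp add: gm_def vec_eq_iff algebra_simps)

lemma gm_inner: "gm x \<bullet> gm y = (x \<bullet> y)\<^sup>2"
proof -
  have "gm x \<bullet> gm y = (\<Sum>k\<in>UNIV. \<Sum>l\<in>UNIV. (x$k * y$k) * (x$l * y$l))"
    by (simp add: gm_def inner_vec_def mult_ac)
  also have "\<dots> = (\<Sum>k\<in>UNIV. x$k * y$k) * (\<Sum>l\<in>UNIV. x$l * y$l)"
    by (simp add: sum_product)
  also have "\<dots> = (x \<bullet> y)\<^sup>2" by (simp add: inner_vec_def power2_eq_square)
  finally show ?thesis .
qed

lemma sum_upd:
  assumes "finite A" "c \<in> A"
  shows "(\<Sum>j\<in>A. h ((f(c:=a)) j)) = (\<Sum>j\<in>A. h (f j)) - h (f c) + (h a :: 'b::ab_group_add)"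
proof -
  have "(\<Sum>j\<in>A. h ((f(c:=a)) j)) = h a + (\<Sum>j\<in>A-{c}. h ((f(c:=a)) j))"
    using assms by (simp add: sum.remove)
  also have "(\<Sum>j\<in>A-{c}. h ((f(c:=a)) j)) = (\<Sum>j\<in>A-{c}. h (f j))" by (intro sum.cong) auto
  also have "(\<Sum>j\<in>A. h (f j)) = h (f c) + (\<Sum>j\<in>A-{c}. h (f j))"
    using assms by (simp add: sum.remove)
  ultimately show ?thesis by (simp add: algebra_simps)
qed

definition Phi :: "nat \<Rightarrow> (nat \<Rightarrow> real^'n) \<Rightarrow> real" where
  "Phi d xs = (let V = (\<Sum>j<d. gm (xs j)) in V \<bullet> V)"

lemma merge:
  fixes xs :: "nat \<Rightarrow> real^'n::finite" and S :: "'n list \<Rightarrow> real"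
  assumes S: "\<And>is js. mset is = mset js \<Longrightarrow> S is = S js"
    and ce: "c < d" "e < d" "c \<noteq> e"
    and un: "norm (xs c) = 1" "norm (xs e) = 1"
    and cc: "(xs c \<bullet> xs e)\<^sup>2 < 1"
  shows "\<exists>w1 w2 a1 a2. norm w1 = 1 \<and> norm w2 = 1 \<and> a1 > 0 \<and> a2 > 0 \<and> a1 + a2 = 1 \<and>
     MS d S xs = a1 * MS d S (xs(c:=w1, e:=w1)) - a2 * MS d S (xs(c:=w2, e:=w2)) \<and>
     a1 * Phi d (xs(c:=w1, e:=w1)) + a2 * Phi d (xs(c:=w2, e:=w2)) > Phi d xs"
proof -
  define u v where "u = xs c" and "v = xs e"
  define k where "k = u \<bullet> v"
  define s t where "s = u + v" and "t = u - v"
  have uu: "u \<bullet> u = 1" "v \<bullet> v = 1" using un by (simp_all add: u_def v_def power2_norm_eq_inner[symmetric])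
  have kb: "-1 < k" "k < 1" using cc abs_square_less_1[of k] by (auto simp: k_def u_def v_def)
  have ss: "s \<bullet> s = 2 + 2*k" unfolding s_def k_def using uu by (simp add: inner_add_left inner_add_right inner_commute)
  have tt: "t \<bullet> t = 2 - 2*k" unfolding t_def k_def using uu by (simp add: inner_diff_left inner_diff_right inner_commute)
  define ns nt where "ns = norm s" and "nt = norm t"
  have ns2: "ns\<^sup>2 = 2 + 2*k" and nt2: "nt\<^sup>2 = 2 - 2*k"
    using ss tt by (simp_all add: ns_def nt_def power2_norm_eq_inner)
  have nsp: "ns > 0" "nt > 0" using ns2 nt2 kb unfolding ns_def nt_def by auto
  define w1 w2 where "w1 = (1/ns) *\<^sub>R s" and "w2 = (1/nt) *\<^sub>R t"
  have nw: "norm w1 = 1" "norm w2 = 1" using nsp by (simp_all add: w1_def w2_def ns_def nt_def)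
  have sw1: "s = ns *\<^sub>R w1" and tw2: "t = nt *\<^sub>R w2" using nsp by (simp_all add: w1_def w2_def)
  define a1 a2 where "a1 = (1+k)/2" and "a2 = (1-k)/2"
  have ap: "a1 > 0" "a2 > 0" "a1 + a2 = 1" using kb by (simp_all add: a1_def a2_def field_simps)
  define B where "B a b = MS d S (xs(c:=a, e:=b))" for a b
  have B_r: "B a (r *\<^sub>R b + r' *\<^sub>R b') = r * B a b + r' * B a b'" for a b b' r r'
    unfolding B_def by (rule MS_lin[OF ce(2)])
  have B_l: "B (r *\<^sub>R a + r' *\<^sub>R a') b = r * B a b + r' * B a' b" for a a' b r r'
    unfolding B_def fun_upd_twist[OF ce(3)] by (rule MS_lin[OF ce(1)])
  have B_sym: "B a b = B b a" for a b
  proof -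
    have "(xs(c:=a, e:=b)) \<circ> sw c e = xs(c:=b, e:=a)" using ce(3) by (intro ext) (simp add: sw_def)
    thus ?thesis unfolding B_def using MS_swap[OF ce(1,2) S, where xs="xs(c:=a, e:=b)"] by simp
  qed
  have Bal: "B (a + a') b = B a b + B a' b" for a a' b using B_l[of 1 a 1 a' b] by simp
  have Bsl: "B (a - a') b = B a b - B a' b" for a a' b using B_l[of 1 a "-1" a' b] by simp
  have Bar: "B a (b + b') = B a b + B a b'" for a b b' using B_r[of a 1 b 1 b'] by simp
  have Bsr: "B a (b - b') = B a b - B a b'" for a b b' using B_r[of a 1 b "-1" b'] by simp
  have Bscl: "B (r *\<^sub>R a) b = r * B a b" for r a b using B_l[of r a 0 a b] by simp
  have Bscr: "B a (r *\<^sub>R b) = r * B a b" for r a b using B_r[of a r b 0 b] by simp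
  have pol: "B s s - B t t = 4 * B u v"
    unfolding s_def t_def Bal Bsl Bar Bsr using B_sym[of v u] by simp
  have Bs: "B s s = 4 * a1 * B w1 w1"
  proof -
    have "B s s = ns\<^sup>2 * B w1 w1" unfolding sw1 Bscl Bscr by (simp add: power2_eq_square)
    thus ?thesis using ns2 by (simp add: a1_def)
  qed
  have Bt: "B t t = 4 * a2 * B w2 w2"
  proof -
    have "B t t = nt\<^sup>2 * B w2 w2" unfolding tw2 Bscl Bscr by (simp add: power2_eq_square)
    thus ?thesis using nt2 by (simp add: a2_def)
  qed
  have xs_eq: "xs(c:=u, e:=v) = xs" by (simp add: u_def v_def)
  have MSeq: "MS d S xs = a1 * MS d S (xs(c:=w1, e:=w1)) - a2 * MS d S (xs(c:=w2, e:=w2))"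
  proof -
    have "MS d S xs = B u v" unfolding B_def xs_eq ..
    thus ?thesis using pol Bs Bt unfolding B_def by simp
  qed
  define R where "R = (\<Sum>j<d. gm (xs j)) - gm u - gm v"
  define A where "A = gm u + gm v"
  have Vw: "(\<Sum>j<d. gm ((xs(c:=w, e:=w)) j)) = R + 2 *\<^sub>R gm w" for w
  proof -
    have 1: "(\<Sum>j<d. gm ((xs(c:=w, e:=w)) j)) = (\<Sum>j<d. gm ((xs(c:=w)) j)) - gm ((xs(c:=w)) e) + gm w"
      using ce by (intro sum_upd) auto
    have 2: "(\<Sum>j<d. gm ((xs(c:=w)) j)) = (\<Sum>j<d. gm (xs j)) - gm (xs c) + gm w"
      using ce by (intro sum_upd) auto
    have 3: "(xs(c:=w)) e = xs e" using ce(3) by simp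
    show ?thesis unfolding 1 2 3 R_def u_def v_def by (simp add: scaleR_2 algebra_simps)
  qed
  have V0: "(\<Sum>j<d. gm (xs j)) = R + A" by (simp add: R_def A_def)
  have gw1: "gm w1 = (1 / (2 + 2*k)) *\<^sub>R gm s" unfolding w1_def gm_scale using ns2
    by (simp add: power_divide)
  have gw2: "gm w2 = (1 / (2 - 2*k)) *\<^sub>R gm t" unfolding w2_def gm_scale using nt2
    by (simp add: power_divide)
  have comb: "a1 *\<^sub>R (2 *\<^sub>R gm w1) + a2 *\<^sub>R (2 *\<^sub>R gm w2) = A"
  proof -
    have "a1 *\<^sub>R (2 *\<^sub>R gm w1) = (1/2) *\<^sub>R gm s" unfolding gw1 using kb
      by (simp add: a1_def field_simps)
    moreover have "a2 *\<^sub>R (2 *\<^sub>R gm w2) = (1/2) *\<^sub>R gm t" unfolding gw2 using kb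
      by (simp add: a2_def field_simps)
    ultimately show ?thesis unfolding s_def t_def A_def
      by (metis (no_types, lifting) gm_par scaleR_add_right scaleR_scaleR scaleR_one
          divide_inverse_commute mult_1 inverse_eq_divide times_divide_eq_left
          nonzero_mult_div_cancel_left zero_neq_numeral)
  qed
  have wi: "w1 \<bullet> w1 = 1" "w2 \<bullet> w2 = 1" using nw by (simp_all add: power2_norm_eq_inner[symmetric])
  have g1: "gm w1 \<bullet> gm w1 = 1" "gm w2 \<bullet> gm w2 = 1" by (simp_all only: gm_inner wi) simp_all
  have gA: "A \<bullet> A = 2 + 2 * k\<^sup>2"
    unfolding A_def using uu by (simp add: inner_add_left inner_add_right gm_inner inner_commute k_def)
  have RA: "a1 * (R \<bullet> (2 *\<^sub>R gm w1)) + a2 * (R \<bullet> (2 *\<^sub>R gm w2)) = R \<bullet> A"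
    unfolding comb[symmetric] by (simp add: inner_add_right)
  have P1: "Phi d (xs(c:=w1, e:=w1)) = R \<bullet> R + 2 * (R \<bullet> (2 *\<^sub>R gm w1)) + 4"
    unfolding Phi_def Let_def Vw using g1 by (simp add: inner_add_left inner_add_right inner_commute)
  have P2: "Phi d (xs(c:=w2, e:=w2)) = R \<bullet> R + 2 * (R \<bullet> (2 *\<^sub>R gm w2)) + 4"
    unfolding Phi_def Let_def Vw using g1 by (simp add: inner_add_left inner_add_right inner_commute)
  have P0: "Phi d xs = R \<bullet> R + 2 * (R \<bullet> A) + 2 + 2 * k\<^sup>2"
    unfolding Phi_def Let_def V0 using gA by (simp add: inner_add_left inner_add_right inner_commute)
  have "a1 * Phi d (xs(c:=w1, e:=w1)) + a2 * Phi d (xs(c:=w2, e:=w2)) = (a1 + a2) * (R \<bullet> R) + 2 * (R \<bullet> A) + 4 * (a1 + a2)"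
    unfolding P1 P2 RA[symmetric] by (simp add: algebra_simps)
  also have "\<dots> = R \<bullet> R + 2 * (R \<bullet> A) + 4" using ap by simp
  finally have "a1 * Phi d (xs(c:=w1, e:=w1)) + a2 * Phi d (xs(c:=w2, e:=w2)) > Phi d xs"
    unfolding P0 using kb abs_square_less_1[of k] by (simp add: k_def)
  thus ?thesis using nw ap MSeq by blast
qed


lemma unit_pm:
  fixes u v :: "real^'n::finite"
  assumes "norm u = 1" "norm v = 1" "(u \<bullet> v)\<^sup>2 = 1"
  shows "v = u \<or> v = -u"
proof -
  have uu: "u \<bullet> u = 1" "v \<bullet> v = 1" using assms(1,2) by (simp_all add: power2_norm_eq_inner[symmetric])
  from assms(3) have "u \<bullet> v = 1 \<or> u \<bullet> v = -1" by (simp add: power2_eq_1_iff)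
  thus ?thesis
  proof
    assume "u \<bullet> v = 1"
    hence "(u - v) \<bullet> (u - v) = 0" using uu by (simp add: inner_diff_left inner_diff_right inner_commute)
    hence "u - v = 0" by simp
    thus ?thesis by simp
  next
    assume "u \<bullet> v = -1"
    hence "(u + v) \<bullet> (u + v) = 0" using uu by (simp add: inner_add_left inner_add_right inner_commute)
    hence "u + v = 0" by simp
    thus ?thesis by (simp add: eq_neg_iff_add_eq_0 add.commute)
  qed
qed

lemma Phi_cont: "continuous_on UNIV (Phi d :: (nat \<Rightarrow> real^'n::finite) \<Rightarrow> real)"
  unfolding Phi_def Let_def gm_def
  by (intro continuous_intros continuous_on_product_coordinates)

lemma core:
  fixes S :: "('n::finite) list \<Rightarrow> real" and xs :: "nat \<Rightarrow> real^'n"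
  assumes S: "\<And>is js. mset is = mset js \<Longrightarrow> S is = S js"
    and diag: "\<And>x. norm x = 1 \<Longrightarrow> \<bar>MS d S (\<lambda>_. x)\<bar> \<le> \<mu>"
    and un: "\<And>j. j < d \<Longrightarrow> norm (xs j) = 1"
  shows "\<bar>MS d S xs\<bar> \<le> \<mu>"
proof -
  obtain e1 :: "real^'n" where e1: "norm e1 = 1" using vector_choose_size[of 1] by auto
  show ?thesis
  proof (cases "d = 0")
    case True
    hence "MS d S xs = MS d S (\<lambda>_. e1)" by (intro MS_cong) auto
    thus ?thesis using diag[OF e1] by simp
  next
    case False hence d0: "0 < d" by simp
    define K where "K = PiE UNIV (\<lambda>j. if j < d then sphere (0::real^'n) 1 else {0})"
    have K_iff: "ys \<in> K \<longleftrightarrow> (\<forall>j<d. norm (ys j) = 1) \<and> (\<forall>j. d \<le> j \<longrightarrow> ys j = 0)" for ys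
      by (auto simp: K_def PiE_iff not_less)
    have cK: "compact K"
    proof -
      have "compactin (product_topology (\<lambda>_. euclidean) UNIV) K"
        unfolding K_def compactin_PiE by auto
      thus ?thesis by (simp add: euclidean_product_topology)
    qed
    define pad where "pad ys = (\<lambda>j. if j < d then ys j else 0)" for ys :: "nat \<Rightarrow> real^'n"
    have padK: "pad ys \<in> K" if "\<And>j. j<d \<Longrightarrow> norm (ys j) = 1" for ys using that by (simp add: K_iff pad_def)
    have MSpad: "MS d S (pad ys) = MS d S ys" for ys by (intro MS_cong) (simp add: pad_def)
    have Kne: "K \<noteq> {}" using padK[of "\<lambda>_. e1"] e1 by auto
    have contA: "continuous_on UNIV (\<lambda>ys. \<bar>MS d S ys\<bar>)" using MS_cont by (intro continuous_intros)
    obtain xm where xm: "xm \<in> K" "\<And>y. y \<in> K \<Longrightarrow> \<bar>MS d S y\<bar> \<le> \<bar>MS d S xm\<bar>"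
      using continuous_attains_sup[OF cK Kne continuous_on_subset[OF contA subset_UNIV]] by blast
    define lam where "lam = \<bar>MS d S xm\<bar>"
    define M where "M = K \<inter> {ys. \<bar>MS d S ys\<bar> = lam}"
    have cM: "compact M" unfolding M_def
      by (intro compact_Int_closed cK closed_Collect_eq contA continuous_on_const)
    have Mne: "M \<noteq> {}" using xm by (auto simp: M_def lam_def)
    obtain x0 where x0: "x0 \<in> M" "\<And>y. y \<in> M \<Longrightarrow> Phi d y \<le> Phi d x0"
      using continuous_attains_sup[OF cM Mne continuous_on_subset[OF Phi_cont subset_UNIV]] by blast
    have x0K: "x0 \<in> K" and x0l: "\<bar>MS d S x0\<bar> = lam" using x0(1) by (auto simp: M_def)
    have x0u: "norm (x0 j) = 1" if "j < d" for j using x0K that by (simp add: K_iff)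
    have par: "(x0 0 \<bullet> x0 j)\<^sup>2 = 1" if j: "0 < j" "j < d" for j
    proof (rule ccontr)
      assume ne: "(x0 0 \<bullet> x0 j)\<^sup>2 \<noteq> 1"
      have "\<bar>x0 0 \<bullet> x0 j\<bar> \<le> norm (x0 0) * norm (x0 j)" by (rule Cauchy_Schwarz_ineq2)
      hence "\<bar>x0 0 \<bullet> x0 j\<bar> \<le> 1" using x0u d0 j by simp
      hence "(x0 0 \<bullet> x0 j)\<^sup>2 \<le> 1" by (simp add: abs_square_le_1)
      hence lt: "(x0 0 \<bullet> x0 j)\<^sup>2 < 1" using ne by simp
      obtain w1 w2 a1 a2 where m: "norm w1 = 1" "norm w2 = 1" "a1 > 0" "a2 > 0" "a1 + a2 = 1"
          "MS d S x0 = a1 * MS d S (x0(0:=w1, j:=w1)) - a2 * MS d S (x0(0:=w2, j:=w2))"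
          "a1 * Phi d (x0(0:=w1, j:=w1)) + a2 * Phi d (x0(0:=w2, j:=w2)) > Phi d x0"
        using merge[where S=S, OF S d0 j(2) _ x0u[OF d0] x0u[OF j(2)] lt] j by auto
      define X Y where "X = MS d S (x0(0:=w1, j:=w1))" and "Y = MS d S (x0(0:=w2, j:=w2))"
      have K1: "x0(0:=w1, j:=w1) \<in> K" "x0(0:=w2, j:=w2) \<in> K" using x0K m(1,2) j d0 by (auto simp: K_iff)
      have b1: "\<bar>X\<bar> \<le> lam" "\<bar>Y\<bar> \<le> lam"
        using xm(2)[OF K1(1)] xm(2)[OF K1(2)] by (simp_all add: lam_def X_def Y_def)
      have "lam = \<bar>a1 * X - a2 * Y\<bar>" using x0l m(6) by (simp add: X_def Y_def)
      also have "\<dots> \<le> \<bar>a1 * X\<bar> + \<bar>a2 * Y\<bar>" by (rule abs_triangle_ineq4)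
      also have "\<dots> = a1 * \<bar>X\<bar> + a2 * \<bar>Y\<bar>" using m(3,4) by (simp add: abs_mult)
      finally have h: "lam \<le> a1 * \<bar>X\<bar> + a2 * \<bar>Y\<bar>" .
      have h1: "a1 * \<bar>X\<bar> \<le> a1 * lam" "a2 * \<bar>Y\<bar> \<le> a2 * lam"
        using b1 m(3,4) by (simp_all add: mult_left_mono)
      have "lam = a1 * lam + a2 * lam" using m(5) by (metis distrib_right mult_1)
      hence "a1 * \<bar>X\<bar> = a1 * lam" "a2 * \<bar>Y\<bar> = a2 * lam" using h h1 by linarith+
      hence "\<bar>X\<bar> = lam" "\<bar>Y\<bar> = lam" using m(3,4) by simp_all
      hence M1: "x0(0:=w1, j:=w1) \<in> M" "x0(0:=w2, j:=w2) \<in> M" using K1 by (simp_all add: M_def X_def Y_def)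
      have "a1 * Phi d (x0(0:=w1, j:=w1)) + a2 * Phi d (x0(0:=w2, j:=w2)) \<le> a1 * Phi d x0 + a2 * Phi d x0"
        using x0(2)[OF M1(1)] x0(2)[OF M1(2)] m(3,4) by (intro add_mono mult_left_mono) auto
      also have "\<dots> = Phi d x0" using m(5) by (metis distrib_right mult_1)
      finally show False using m(7) by simp
    qed
    define u where "u = x0 0"
    have uu: "norm u = 1" using x0u d0 by (simp add: u_def)
    define sg where "sg j = (if x0 j = u then 1 else -1::real)" for j
    have x0j: "x0 j = sg j *\<^sub>R u" if "j < d" for j
    proof (cases "j = 0")
      case True thus ?thesis by (simp add: sg_def u_def)
    next
      case False
      hence "(u \<bullet> x0 j)\<^sup>2 = 1" using par[of j] that by (simp add: u_def)
      hence "x0 j = u \<or> x0 j = -u" using unit_pm[OF uu x0u[OF that]] by blast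
      thus ?thesis by (auto simp: sg_def)
    qed
    have "MS d S x0 = MS d S (\<lambda>j. sg j *\<^sub>R u)" by (intro MS_cong) (simp add: x0j)
    also have "\<dots> = (\<Prod>j<d. sg j) * MS d S (\<lambda>_. u)"
      unfolding MS_def sum_distrib_left
      by (intro sum.cong refl) (simp add: prod.distrib)
    finally have "lam = \<bar>(\<Prod>j<d. sg j)\<bar> * \<bar>MS d S (\<lambda>_. u)\<bar>" using x0l by (simp add: abs_mult)
    also have "\<bar>(\<Prod>j<d. sg j)\<bar> = 1" unfolding abs_prod by (intro prod.neutral) (simp add: sg_def)
    finally have "lam \<le> \<mu>" using diag[OF uu] by simp
    moreover have "\<bar>MS d S xs\<bar> \<le> lam"
    proof -
      have pk: "pad xs \<in> K" by (rule padK) (rule un)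
      show ?thesis using xm(2)[OF pk] MSpad[of xs] by (simp add: lam_def)
    qed
    ultimately show ?thesis by simp
  qed
qed


lemma tm_cont: "continuous_on UNIV (tensor_map d T)"
  unfolding tensor_map_def by (intro continuous_intros)

lemma spec_val:
  fixes T :: "('n::finite) ptensor"
  shows "(\<Sum>i\<in>UNIV. \<Sum>is\<in>idx_lists d. T i is * y $ i * (\<Prod>j<d. (xs j) $ (is ! j)))
        = MS d (\<lambda>is. \<Sum>i\<in>UNIV. y $ i * T i is) xs"
  unfolding MS_def sum_distrib_right
  by (subst sum.swap) (simp add: mult_ac)

lemma spec_diag:
  fixes T :: "('n::finite) ptensor"
  shows "MS d (\<lambda>is. \<Sum>i\<in>UNIV. y $ i * T i is) (\<lambda>_. x) = y \<bullet> tensor_map d T x"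
  unfolding MS_def inner_vec_def tensor_map_def sum_distrib_right
  by (subst sum.swap) (simp add: sum_distrib_left mult_ac)

lemma spec_char:
  fixes T :: "('n::finite) ptensor"
  assumes s: "sym_tensor d T"
  shows "(\<forall>x. norm x = 1 \<longrightarrow> norm (tensor_map d T x) \<le> spec_norm d T) \<and>
         (\<exists>x. norm x = 1 \<and> norm (tensor_map d T x) = spec_norm d T)"
proof -
  have sph: "compact (sphere (0::real^'n) 1)" "sphere (0::real^'n) 1 \<noteq> {}" by simp_all
  obtain xs where xs: "xs \<in> sphere 0 1" "\<And>y. y \<in> sphere 0 1 \<Longrightarrow> norm (tensor_map d T y) \<le> norm (tensor_map d T xs)"
    using continuous_attains_sup[OF sph continuous_on_subset[OF continuous_on_norm[OF tm_cont] subset_UNIV]]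
    by blast
  define mu where "mu = norm (tensor_map d T xs)"
  obtain e1 :: "real^'n" where e1: "norm e1 = 1" using vector_choose_size[of 1] by auto
  define SP where "SP = {\<bar>\<Sum>i\<in>UNIV. \<Sum>is\<in>idx_lists d. T i is * y $ i * (\<Prod>j<d. (zs j) $ (is ! j))\<bar> | y zs.
        norm y = 1 \<and> (\<forall>j<d. norm (zs j) = 1)}"
  have spec: "spec_norm d T = Sup SP" unfolding spec_norm_def SP_def ..
  have ub: "v \<le> mu" if vSP: "v \<in> SP" for v
  proof -
    obtain y zs where v: "v = \<bar>\<Sum>i\<in>UNIV. \<Sum>is\<in>idx_lists d. T i is * y $ i * (\<Prod>j<d. (zs j) $ (is ! j))\<bar>"
      and y: "norm y = 1" and zs: "\<forall>j<d. norm (zs j) = 1" using vSP unfolding SP_def by blast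
    have Ssym: "(\<Sum>i\<in>UNIV. y $ i * T i is) = (\<Sum>i\<in>UNIV. y $ i * T i js)" if "mset is = mset js" for "is" js
      using symD2[OF s that] by simp
    have diag: "\<bar>MS d (\<lambda>is. \<Sum>i\<in>UNIV. y $ i * T i is) (\<lambda>_. x)\<bar> \<le> mu" if "norm x = 1" for x
    proof -
      have "\<bar>MS d (\<lambda>is. \<Sum>i\<in>UNIV. y $ i * T i is) (\<lambda>_. x)\<bar> = \<bar>y \<bullet> tensor_map d T x\<bar>" by (simp add: spec_diag)
      also have "\<dots> \<le> norm y * norm (tensor_map d T x)" by (rule Cauchy_Schwarz_ineq2)
      also have "\<dots> \<le> mu" using y xs(2)[of x] that by (simp add: mu_def)
      finally show ?thesis .
    qed
    show ?thesis unfolding v spec_val using core[OF Ssym diag] zs by blast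
  qed
  have inSP: "norm (tensor_map d T x) \<in> SP" if "norm x = 1" for x
  proof (cases "tensor_map d T x = 0")
    case True
    have "\<bar>\<Sum>i\<in>UNIV. \<Sum>is\<in>idx_lists d. T i is * e1 $ i * (\<Prod>j<d. ((\<lambda>_. x) j) $ (is ! j))\<bar> = norm (tensor_map d T x)"
      unfolding spec_val spec_diag True by simp
    thus ?thesis unfolding SP_def using e1 that by (intro CollectI exI[of _ e1] exI[of _ "\<lambda>_. x"]) auto
  next
    case False
    define y where "y = (1 / norm (tensor_map d T x)) *\<^sub>R tensor_map d T x"
    have ny: "norm y = 1" using False by (simp add: y_def)
    have "\<bar>\<Sum>i\<in>UNIV. \<Sum>is\<in>idx_lists d. T i is * y $ i * (\<Prod>j<d. ((\<lambda>_. x) j) $ (is ! j))\<bar> = norm (tensor_map d T x)"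
      unfolding spec_val spec_diag y_def using False by (simp add: power2_norm_eq_inner[symmetric] power2_eq_square)
    thus ?thesis unfolding SP_def using ny that by (intro CollectI exI[of _ y] exI[of _ "\<lambda>_. x"]) auto
  qed
  have bdd: "bdd_above SP" using ub by (auto simp: bdd_above_def)
  have "mu \<in> SP" using inSP xs(1) by (simp add: mu_def)
  hence "spec_norm d T = mu" unfolding spec using ub bdd by (intro antisym cSup_least cSup_upper) auto
  thus ?thesis using xs by (auto simp: mu_def)
qed


lemma tm_homog: "tensor_map d T (r *\<^sub>R x) = r^d *\<^sub>R tensor_map d T x"
  unfolding tensor_map_def
  by (simp add: vec_eq_iff prod.distrib sum_distrib_left mult_ac)

lemma norm_bound:
  fixes T :: "('n::finite) ptensor"
  assumes s: "sym_tensor d T"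
  shows "norm (tensor_map d T x) \<le> spec_norm d T * norm x ^ d"
proof -
  obtain e1 :: "real^'n" where e1: "norm e1 = 1" using vector_choose_size[of 1] by auto
  define u where "u = (if x = 0 then e1 else (1 / norm x) *\<^sub>R x)"
  have nu: "norm u = 1" using e1 by (simp add: u_def)
  have xu: "x = norm x *\<^sub>R u" by (simp add: u_def)
  have "norm (tensor_map d T x) = norm x ^ d * norm (tensor_map d T u)"
    by (subst xu, simp only: tm_homog) simp
  also have "\<dots> \<le> norm x ^ d * spec_norm d T"
    using spec_char[OF s] nu by (intro mult_left_mono) auto
  finally show ?thesis by (simp add: mult.commute)
qed

lemma spec_nonneg: "sym_tensor d (T::('n::finite) ptensor) \<Longrightarrow> spec_norm d T \<ge> 0"
  using spec_char[of d T] by (metis norm_ge_zero)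

lemma norm_hs:
  fixes T :: "('n::finite) ptensor"
  shows "(norm (tensor_map d T x))\<^sup>2 \<le> (hs_norm d T)\<^sup>2 * ((norm x)\<^sup>2) ^ d"
proof -
  have "(norm (tensor_map d T x))\<^sup>2 = (\<Sum>i\<in>UNIV. (\<Sum>is\<in>idx_lists d. T i is * mon x is)\<^sup>2)"
    unfolding power2_norm_eq_inner inner_vec_def tm_mon by (simp add: power2_eq_square)
  also have "\<dots> \<le> (\<Sum>i\<in>UNIV. (\<Sum>is\<in>idx_lists d. (T i is)\<^sup>2) * (\<Sum>is\<in>idx_lists d. (mon x is)\<^sup>2))"
    by (intro sum_mono Cauchy_Schwarz_ineq_sum)
  also have "(\<Sum>is\<in>idx_lists d. (mon x is)\<^sup>2) = (\<Sum>is\<in>idx_lists d. \<Prod>j<d. (x $ (is!j))\<^sup>2)"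
    by (intro sum.cong refl) (simp add: prod_nth_mon[symmetric] idx_lists_def prod_power_distrib)
  also have "\<dots> = (\<Prod>j<d. \<Sum>a\<in>UNIV. (x $ a)\<^sup>2)" by (rule KL)
  also have "\<dots> = ((norm x)\<^sup>2) ^ d" unfolding power2_norm_eq_inner inner_vec_def by (simp add: power2_eq_square)
  finally show ?thesis by (simp add: hs_sq sum_distrib_right)
qed

lemma spec_le_hs:
  fixes T :: "('n::finite) ptensor"
  assumes s: "sym_tensor d T"
  shows "spec_norm d T \<le> hs_norm d T"
proof -
  obtain x :: "real^'n" where x: "norm x = 1" "norm (tensor_map d T x) = spec_norm d T"
    using spec_char[OF s] by blast
  have "(spec_norm d T)\<^sup>2 \<le> (hs_norm d T)\<^sup>2" using norm_hs[of d T x] x by simp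
  thus ?thesis using hs_nonneg by (rule power2_le_imp_le)
qed

lemma spec_zero_iff:
  fixes T :: "('n::finite) ptensor"
  assumes s: "sym_tensor d T"
  shows "spec_norm d T = 0 \<longleftrightarrow> T = (\<lambda>_ _. 0)"
proof
  assume z: "spec_norm d T = 0"
  have "tensor_map d T x = 0" for x using norm_bound[OF s, of x] z by simp
  thus "T = (\<lambda>_ _. 0)" by (rule sym_zero[OF s])
next
  assume "T = (\<lambda>_ _. 0)"
  hence "tensor_map d T x = 0" for x by (simp add: tensor_map_def vec_eq_iff)
  thus "spec_norm d T = 0" using spec_char[OF s] by auto
qed


locale subm =
  fixes a :: "nat \<Rightarrow> real" and p :: nat
  assumes p2: "p \<ge> 2" and nn: "\<And>k. a k \<ge> 0"
    and sm: "\<And>k l. k \<ge> 1 \<Longrightarrow> l \<ge> 1 \<Longrightarrow> a (k+l) \<le> a k * a l ^ (p^k)"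
begin

definition b :: "nat \<Rightarrow> real" where "b k = a k powr ((real p - 1) / (real p ^ k - 1))"

lemma P1: "real p > 1" using p2 by simp
lemma Pk: "k \<ge> 1 \<Longrightarrow> real p ^ k > 1" using P1 by (simp add: one_less_power)
lemma b_nn: "b k \<ge> 0" by (simp add: b_def)

lemma pow_bound: "k \<ge> 1 \<Longrightarrow> a k \<le> a 1 powr ((real p ^ k - 1) / (real p - 1))"
proof (induction k rule: nat_induct_at_least)
  case base thus ?case using P1 nn[of 1] by (simp add: powr_one)
  case (Suc k)
  define E where "E = (real p ^ k - 1) / (real p - 1)"
  have "a (Suc k) = a (1 + k)" by simp
  also have "\<dots> \<le> a 1 * a k ^ p" using sm[of 1 k] Suc.hyps by simp
  also have "\<dots> \<le> a 1 * (a 1 powr E) ^ p"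
    using Suc.IH nn by (intro mult_left_mono power_mono) (auto simp: E_def)
  also have "\<dots> = a 1 powr ((real p ^ Suc k - 1) / (real p - 1))"
  proof (cases "a 1 = 0")
    case True thus ?thesis using p2 by simp
  next
    case False
    hence a1: "a 1 > 0" using nn[of 1] by simp
    have "(a 1 powr E) ^ p = a 1 powr (E * real p)"
      using a1 by (simp add: powr_realpow[symmetric] powr_powr)
    hence "a 1 * (a 1 powr E) ^ p = a 1 powr (1 + E * real p)" using a1 by (simp add: powr_add)
    also have "1 + E * real p = (real p ^ Suc k - 1) / (real p - 1)"
      using P1 by (simp add: E_def field_simps)
    finally show ?thesis .
  qed
  finally show ?case .
qed

lemma b_bound: "k \<ge> 1 \<Longrightarrow> b k \<le> a 1"
proof -
  assume k: "k \<ge> 1"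
  have e: "0 \<le> (real p - 1) / (real p ^ k - 1)" using Pk[OF k] P1 by simp
  have "b k \<le> (a 1 powr ((real p ^ k - 1) / (real p - 1))) powr ((real p - 1) / (real p ^ k - 1))"
    unfolding b_def by (intro powr_mono2 e nn pow_bound k)
  also have "\<dots> = a 1" using Pk[OF k] P1 nn[of 1] by (simp add: powr_powr powr_one)
  finally show ?thesis .
qed

lemma b_double: "m \<ge> 1 \<Longrightarrow> b (2*m) \<le> b m"
proof -
  assume m: "m \<ge> 1"
  have "a (2*m) = a (m+m)" by (metis mult_2)
  also have "\<dots> \<le> a m * a m ^ (p^m)" using sm[OF m m] .
  finally have a2: "a (2*m) \<le> a m ^ Suc (p^m)" by simp
  show ?thesis
  proof (cases "a m = 0")
    case True
    hence "a (2*m) = 0" using a2 nn[of "2*m"] by simp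
    thus ?thesis using b_nn by (simp add: b_def)
  next
    case False
    hence am: "a m > 0" using nn[of m] by simp
    have Q: "real p ^ m > 1" using Pk[OF m] .
    have e2: "0 \<le> (real p - 1) / (real p ^ (2*m) - 1)" using Pk[of "2*m"] m P1 by simp
    have "b (2*m) \<le> (a m ^ Suc (p^m)) powr ((real p - 1) / (real p ^ (2*m) - 1))"
      unfolding b_def by (intro powr_mono2 e2 nn a2)
    also have "\<dots> = a m powr (real (Suc (p^m)) * ((real p - 1) / (real p ^ (2*m) - 1)))"
    proof -
      have "a m ^ Suc (p^m) = a m powr real (Suc (p^m))" using am by (rule powr_realpow[symmetric])
      thus ?thesis by (simp only: powr_powr)
    qed
    also have "real (Suc (p^m)) * ((real p - 1) / (real p ^ (2*m) - 1)) = (real p - 1) / (real p ^ m - 1)"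
    proof -
      define Qm where "Qm = real p ^ m"
      have eQ: "real p ^ (2*m) = Qm\<^sup>2" unfolding Qm_def by (metis power_mult mult.commute)
      have eS: "real (Suc (p^m)) = 1 + Qm" by (simp add: Qm_def)
      have f: "Qm\<^sup>2 - 1 = (Qm - 1) * (Qm + 1)" by (simp add: algebra_simps power2_eq_square)
      have "Qm - 1 \<noteq> 0" "Qm + 1 \<noteq> 0" using Q by (auto simp: Qm_def)
      hence "(1 + Qm) * ((real p - 1) / ((Qm - 1) * (Qm + 1))) = (real p - 1) / (Qm - 1)"
        by (simp add: divide_simps)
      thus ?thesis unfolding eQ eS f by (simp add: Qm_def)
    qed
    finally show ?thesis by (simp add: b_def)
  qed
qed

lemma b_dec: "m \<ge> 1 \<Longrightarrow> decseq (\<lambda>l. b (m * 2^l))"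
proof (rule decseq_SucI)
  fix l assume m: "m \<ge> 1"
  have "m * 2^l \<ge> 1" using m by simp
  hence "b (2 * (m * 2^l)) \<le> b (m * 2^l)" by (rule b_double)
  thus "b (m * 2 ^ Suc l) \<le> b (m * 2 ^ l)" by (simp add: mult_ac)
qed


lemma b_conv: "convergent b"
proof (cases "\<exists>r\<ge>1. a r = 0")
  case True
  then obtain r where r: "r \<ge> 1" "a r = 0" by blast
  have az: "a k = 0" if "k > r" for k
  proof -
    have "a k = a (r + (k - r))" using that by simp
    also have "\<dots> \<le> a r * a (k-r) ^ (p^r)" using sm[of r "k-r"] r that by simp
    finally show ?thesis using r nn[of k] by simp
  qed
  have "eventually (\<lambda>k. b k = 0) sequentially"
    using eventually_gt_at_top[of r] by eventually_elim (simp add: b_def az)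
  hence "b \<longlonglongrightarrow> 0" by (rule tendsto_eventually)
  thus ?thesis by (auto simp: convergent_def)
next
  case False
  hence apos: "a k > 0" if "k \<ge> 1" for k using nn[of k] that by force
  define P where "P = real p"
  have P: "P > 1" using P1 by (simp add: P_def)
  have Pk1: "P^k - 1 > 0" if "k \<ge> 1" for k using Pk[OF that] by (simp add: P_def)
  define c where "c k = ln (a k)" for k
  define d where "d k = c k / (P^k - 1)" for k
  have c_sub: "c (k+l) \<le> c k + P^k * c l" if "k \<ge> 1" "l \<ge> 1" for k l
  proof -
    have "ln (a (k+l)) \<le> ln (a k * a l ^ (p^k))"
      using sm[OF that] apos that by (subst ln_le_cancel_iff) auto
    also have "\<dots> = ln (a k) + real (p^k) * ln (a l)"
      using apos[OF that(1)] apos[OF that(2)] by (simp add: ln_mult ln_realpow)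
    finally show ?thesis by (simp add: c_def P_def)
  qed
  have c_mult: "c (q*m) \<le> c m * (P^(q*m) - 1) / (P^m - 1)" if m: "m \<ge> 1" and q: "q \<ge> 1" for m q
    using q
  proof (induction q rule: nat_induct_at_least)
    case base thus ?case using Pk1[OF m] by simp
  next
    case (Suc q)
    have qm: "q*m \<ge> 1" using Suc.hyps m by simp
    have "c (Suc q * m) = c (m + q*m)" by (simp add: add.commute)
    also have "\<dots> \<le> c m + P^m * c (q*m)" using c_sub[OF m qm] .
    also have "\<dots> \<le> c m + P^m * (c m * (P^(q*m) - 1) / (P^m - 1))"
      using Suc.IH P by (intro add_left_mono mult_left_mono) auto
    also have "\<dots> = c m * (P^(Suc q * m) - 1) / (P^m - 1)"
      using Pk1[OF m] by (simp add: field_simps power_add)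
    finally show ?case .
  qed
  define K where "K m = (\<Sum>r\<in>{1..m}. \<bar>c r - d m * (P^r - 1)\<bar>)" for m
  have d_bound: "d k \<le> d m + K m / (P^k - 1)" if m: "m \<ge> 1" and k: "k > m" for m k
  proof -
    define q r where "q = (k - 1) div m" and "r = (k - 1) mod m + 1"
    have dm: "(k-1) div m * m + (k-1) mod m = k - 1" by (rule div_mult_mod_eq)
    have kqr: "k = r + q*m" using k m dm unfolding q_def r_def by linarith
    have r1: "r \<ge> 1" "r \<le> m" using m by (auto simp: r_def Suc_leI)
    have "m div m \<le> (k-1) div m" by (rule div_le_mono) (use k in simp)
    hence q1: "q \<ge> 1" using m by (simp add: q_def)
    have qm: "q*m \<ge> 1" using q1 m by simp
    have "c k \<le> c r + P^r * c (q*m)" unfolding kqr using c_sub[OF r1(1) qm] .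
    also have "\<dots> \<le> c r + P^r * (c m * (P^(q*m) - 1) / (P^m - 1))"
      using c_mult[OF m q1] P by (intro add_left_mono mult_left_mono) auto
    also have "\<dots> = c r + d m * (P^k - P^r)"
      unfolding kqr d_def by (simp add: power_add field_simps)
    also have "\<dots> = d m * (P^k - 1) + (c r - d m * (P^r - 1))" by (simp add: algebra_simps)
    also have "\<dots> \<le> d m * (P^k - 1) + K m"
    proof -
      have "c r - d m * (P^r - 1) \<le> \<bar>c r - d m * (P^r - 1)\<bar>" by simp
      also have "\<dots> \<le> K m" unfolding K_def using r1 by (intro member_le_sum) auto
      finally show ?thesis by simp
    qed
    finally have "c k \<le> d m * (P^k - 1) + K m" .
    hence "c k / (P^k - 1) \<le> (d m * (P^k - 1) + K m) / (P^k - 1)"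
      using Pk1[of k] k by (intro divide_right_mono) auto
    also have "\<dots> = d m + K m / (P^k - 1)" using Pk1[of k] k by (simp add: add_divide_distrib)
    finally show ?thesis by (simp add: d_def[of k])
  qed
  have b_exp: "b k = exp ((P - 1) * d k)" if "k \<ge> 1" for k
    using apos[OF that] by (simp add: b_def powr_def d_def c_def P_def field_simps)
  have b_le: "b k \<le> b m * exp ((P - 1) * K m / (P^k - 1))" if m: "m \<ge> 1" and k: "k > m" for m k
  proof -
    have "(P - 1) * d k \<le> (P - 1) * (d m + K m / (P^k - 1))"
      using d_bound[OF m k] P by (intro mult_left_mono) auto
    also have "\<dots> = (P - 1) * d m + (P - 1) * K m / (P^k - 1)" by (simp add: ring_distribs)
    finally have "(P - 1) * d k \<le> (P - 1) * d m + (P - 1) * K m / (P^k - 1)" .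
    hence "exp ((P - 1) * d k) \<le> exp ((P - 1) * d m) * exp ((P - 1) * K m / (P^k - 1))"
      by (simp add: exp_add[symmetric])
    thus ?thesis using b_exp[OF m] b_exp[of k] m k by simp
  qed
  define L where "L = Inf (b ` {1..})"
  have bdd: "bdd_below (b ` {1..})" using b_nn by (auto simp: bdd_below_def)
  have L_le: "L \<le> b k" if "k \<ge> 1" for k unfolding L_def using bdd that by (intro cInf_lower) auto
  have "b \<longlonglongrightarrow> L"
  proof (rule tendstoI)
    fix e :: real assume e: "e > 0"
    have "Inf (b ` {1..}) < L + e" using e by (simp add: L_def)
    then obtain m where m: "m \<ge> 1" "b m < L + e" using cInf_lessD[of "b ` {1..}"] by auto
    have lim0: "(\<lambda>k. (P - 1) * K m / (P^k - 1)) \<longlonglongrightarrow> 0"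
    proof -
      have "filterlim (\<lambda>k. norm (P^k)) at_top sequentially"
        by (rule filterlim_at_infinity_imp_norm_at_top[OF filterlim_realpow_sequentially_gt1]) (use P in simp)
      hence "filterlim (\<lambda>k. P^k) at_top sequentially" using P by (simp add: norm_power)
      hence "filterlim (\<lambda>k. -1 + P^k) at_top sequentially"
        by (intro filterlim_tendsto_add_at_top[OF tendsto_const])
      hence "(\<lambda>k. inverse (-1 + P^k)) \<longlonglongrightarrow> 0" by (rule tendsto_inverse_0_at_top)
      hence "(\<lambda>k. ((P - 1) * K m) * inverse (-1 + P^k)) \<longlonglongrightarrow> ((P - 1) * K m) * 0"
        by (intro tendsto_mult tendsto_const)
      thus ?thesis by (simp add: divide_inverse)
    qed
    have "(\<lambda>k. b m * exp ((P - 1) * K m / (P^k - 1))) \<longlonglongrightarrow> b m * exp 0"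
      by (intro tendsto_mult tendsto_const tendsto_exp lim0)
    hence "eventually (\<lambda>k. b m * exp ((P - 1) * K m / (P^k - 1)) < L + e) sequentially"
      using m(2) by (intro order_tendstoD(2)) auto
    thus "eventually (\<lambda>k. dist (b k) L < e) sequentially"
      using eventually_gt_at_top[of m]
    proof eventually_elim
      case (elim k)
      have "b k < L + e" using b_le[OF m(1) elim(2)] elim(1) by simp
      moreover have "L \<le> b k" using L_le[of k] elim(2) m(1) by simp
      ultimately show ?case using e by (simp add: dist_real_def)
    qed
  qed
  thus ?thesis by (auto simp: convergent_def)
qed

end


context
  fixes p :: nat and f :: "('n::finite) ptensor"
begin

abbreviation "sn k \<equiv> spec_norm (p^k) (titer p f k)"

lemma t_bound: "norm ((tensor_map p f ^^ k) x) \<le> sn k * norm x ^ (p^k)"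
  using norm_bound[OF titer_sym, of p k f x] titer_map[of p k f] by simp

lemma t_max: "\<exists>x. norm x = 1 \<and> norm ((tensor_map p f ^^ k) x) = sn k"
  using spec_char[OF titer_sym, of p k f] titer_map[of p k f] by simp

lemma t_nn: "sn k \<ge> 0" by (rule spec_nonneg[OF titer_sym])

lemma t_homog: "(tensor_map p f ^^ k) (r *\<^sub>R x) = r^(p^k) *\<^sub>R (tensor_map p f ^^ k) x"
  using tm_homog[of "p^k" "titer p f k" r x] titer_map[of p k f] by simp

lemma t_zero: "sn k = 0 \<longleftrightarrow> titer p f k = (\<lambda>_ _. 0)"
  by (rule spec_zero_iff[OF titer_sym])

lemma t_sub: "sn (k+l) \<le> sn k * sn l ^ (p^k)"
proof -
  obtain x where x: "norm x = 1" "norm ((tensor_map p f ^^ (k+l)) x) = sn (k+l)" using t_max by blast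
  have "sn (k+l) = norm ((tensor_map p f ^^ k) ((tensor_map p f ^^ l) x))" using x(2) by (simp add: funpow_add)
  also have "\<dots> \<le> sn k * norm ((tensor_map p f ^^ l) x) ^ (p^k)" by (rule t_bound)
  also have "\<dots> \<le> sn k * sn l ^ (p^k)"
    using t_bound[of l x] x(1) t_nn by (intro mult_left_mono power_mono) auto
  finally show ?thesis .
qed

lemma t_eq:
  assumes p: "p \<ge> 1"
  shows "sn (k+l) = sn k * sn l ^ (p^k) \<longleftrightarrow>
    (titer p f l = (\<lambda>_ _. 0) \<or> (\<exists>xs. norm xs = 1 \<and> norm ((tensor_map p f ^^ l) xs) = sn l
       \<and> norm ((tensor_map p f ^^ k) ((1 / sn l) *\<^sub>R (tensor_map p f ^^ l) xs)) = sn k))"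
  (is "?L \<longleftrightarrow> ?R")
proof
  have pk: "p^k > 0" using p by simp
  assume L: ?L
  show ?R
  proof (cases "sn l = 0")
    case True thus ?thesis using t_zero by blast
  next
    case False
    hence sl: "sn l > 0" using t_nn[of l] by simp
    show ?thesis
    proof (cases "sn k = 0")
      case True
      obtain x where x: "norm x = 1" "norm ((tensor_map p f ^^ l) x) = sn l" using t_max by blast
      have "norm ((tensor_map p f ^^ k) ((1 / sn l) *\<^sub>R (tensor_map p f ^^ l) x)) \<le> 0"
        using t_bound[of k] True by (metis mult_zero_left)
      hence "norm ((tensor_map p f ^^ k) ((1 / sn l) *\<^sub>R (tensor_map p f ^^ l) x)) = sn k"
        using True by simp
      thus ?thesis using x by blast
    next
      case False
      hence sk: "sn k > 0" using t_nn[of k] by simp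
      obtain x where x: "norm x = 1" "norm ((tensor_map p f ^^ (k+l)) x) = sn (k+l)" using t_max by blast
      define z where "z = (tensor_map p f ^^ l) x"
      define y where "y = (1 / sn l) *\<^sub>R z"
      have zy: "z = sn l *\<^sub>R y" using sl by (simp add: y_def)
      have nz: "norm z \<le> sn l" using t_bound[of l x] x(1) by (simp add: z_def)
      have "sn k * sn l ^ (p^k) = norm ((tensor_map p f ^^ k) z)" using L x(2) by (simp add: funpow_add z_def)
      also have "\<dots> = sn l ^ (p^k) * norm ((tensor_map p f ^^ k) y)" unfolding zy t_homog using sl by simp
      finally have ny: "norm ((tensor_map p f ^^ k) y) = sn k" using sl by simp
      have "sn k \<le> sn k * norm y ^ (p^k)" using t_bound[of k y] ny by simp
      hence n1: "1 \<le> norm y ^ (p^k)" using sk by simp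
      have yle: "norm y \<le> 1" using nz sl by (simp add: y_def divide_le_eq_1)
      have "norm y ^ (p^k) \<le> norm y ^ 1" using pk yle by (intro power_decreasing) auto
      hence "norm y = 1" using n1 yle by simp
      hence "norm z = sn l" using sl by (simp add: y_def)
      thus ?thesis using x(1) ny by (auto simp: z_def y_def)
    qed
  qed
next
  have pk: "p^k > 0" using p by simp
  assume R: ?R
  have zcase: "sn (k+l) = sn k * sn l ^ (p^k)" if "sn l = 0"
  proof -
    have z: "sn l ^ (p^k) = 0" using that pk by (simp add: power_0_left)
    have "sn (k+l) \<le> 0" using t_sub[of k l] z by simp
    thus ?thesis using t_nn[of "k+l"] z by simp
  qed
  show ?L
  proof (cases "sn l = 0")
    case True thus ?thesis by (rule zcase)
  next
    case False
    hence sl: "sn l > 0" using t_nn[of l] by simp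
    hence "titer p f l \<noteq> (\<lambda>_ _. 0)" using t_zero[of l] by simp
    then obtain x where x: "norm x = 1" "norm ((tensor_map p f ^^ l) x) = sn l"
      "norm ((tensor_map p f ^^ k) ((1 / sn l) *\<^sub>R (tensor_map p f ^^ l) x)) = sn k" using R by blast
    define z where "z = (tensor_map p f ^^ l) x"
    define y where "y = (1 / sn l) *\<^sub>R z"
    have zy: "z = sn l *\<^sub>R y" using sl by (simp add: y_def)
    have "sn k * sn l ^ (p^k) = sn l ^ (p^k) * norm ((tensor_map p f ^^ k) y)"
      using x(3) by (simp add: y_def z_def)
    also have "\<dots> = norm ((tensor_map p f ^^ k) z)" unfolding zy t_homog using sl by simp
    also have "\<dots> = norm ((tensor_map p f ^^ (k+l)) x)" by (simp add: funpow_add z_def)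
    also have "\<dots> \<le> sn (k+l)" using t_bound[of "k+l" x] x(1) by simp
    finally show ?thesis using t_sub[of k l] by simp
  qed
qed

end


theorem theorem3p3:
  fixes p :: nat and f :: "('n::finite) ptensor"
  assumes p2: "p \<ge> 2"
    and symF: "sym_tensor p f"
    and nz: "f \<noteq> (\<lambda>_ _. 0)"
    and not_rank1: "\<not> (\<exists>(a::real) (u::real^'n). norm u = 1 \<and> a \<noteq> 0 \<and>
          (\<forall>i is. length is = p \<longrightarrow> f i is = a * u $ i * (\<Prod>j<p. u $ (is ! j))))"
  shows "(\<forall>k\<ge>1. ftilde p f k \<le> spec_norm p f)
    \<and> (\<forall>k\<ge>1. \<forall>l\<ge>1. spec_norm (p ^ (k + l)) (titer p f (k + l))
          \<le> spec_norm (p ^ k) (titer p f k) * spec_norm (p ^ l) (titer p f l) ^ (p ^ k))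
    \<and> (\<forall>m\<ge>1. decseq (\<lambda>l. ftilde p f (m * 2 ^ l)))
    \<and> convergent (ftilde p f)
    \<and> rho3 p f \<le> rho2 p f
    \<and> (\<forall>k\<ge>1. \<forall>l\<ge>1.
         spec_norm (p ^ (k + l)) (titer p f (k + l))
           = spec_norm (p ^ k) (titer p f k) * spec_norm (p ^ l) (titer p f l) ^ (p ^ k)
         \<longleftrightarrow> (titer p f l = (\<lambda>_ _. 0)
              \<or> (\<exists>xs::real^'n. norm xs = 1
                   \<and> norm ((tensor_map p f ^^ l) xs) = spec_norm (p ^ l) (titer p f l)
                   \<and> norm ((tensor_map p f ^^ k)
                        ((1 / spec_norm (p ^ l) (titer p f l)) *\<^sub>R (tensor_map p f ^^ l) xs))
                       = spec_norm (p ^ k) (titer p f k))))"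
proof -
  interpret S: subm "\<lambda>k. spec_norm (p^k) (titer p f k)" p
    by unfold_locales (use p2 t_nn t_sub in auto)
  interpret Hs: subm "\<lambda>k. hs_norm (p^k) (titer p f k)" p
    by unfold_locales (use p2 hs_nonneg titer_hs in auto)
  have ft: "ftilde p f = S.b" by (rule ext) (simp add: ftilde_def S.b_def)
  have hb: "Hs.b = (\<lambda>k. hs_norm (p ^ k) (titer p f k) powr ((real p - 1) / (real p ^ k - 1)))"
    by (rule ext) (simp add: Hs.b_def)
  have r2: "rho2 p f = lim Hs.b" unfolding rho2_def hb ..
  have t1: "titer p f 1 = f"
  proof (rule sym_unique)
    show "sym_tensor p (titer p f 1)" using titer_sym[of p 1 f] by simp
    show "sym_tensor p f" by (rule symF)
    show "tensor_map p (titer p f 1) = tensor_map p f" using titer_map[of p 1 f] by simp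
  qed
  have P1: "(\<forall>k\<ge>1. ftilde p f k \<le> spec_norm p f)"
    using S.b_bound t1 unfolding ft by simp
  have P2: "(\<forall>k\<ge>1. \<forall>l\<ge>1. spec_norm (p ^ (k + l)) (titer p f (k + l))
          \<le> spec_norm (p ^ k) (titer p f k) * spec_norm (p ^ l) (titer p f l) ^ (p ^ k))"
    using t_sub by blast
  have P3: "(\<forall>m\<ge>1. decseq (\<lambda>l. ftilde p f (m * 2 ^ l)))" unfolding ft using S.b_dec by blast
  have P4: "convergent (ftilde p f)" unfolding ft by (rule S.b_conv)
  have P5: "rho3 p f \<le> rho2 p f"
  proof -
    have "S.b \<longlonglongrightarrow> lim S.b" using S.b_conv by (simp add: convergent_LIMSEQ_iff)
    moreover have "Hs.b \<longlonglongrightarrow> lim Hs.b" using Hs.b_conv by (simp add: convergent_LIMSEQ_iff)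
    moreover have "\<exists>N. \<forall>n\<ge>N. S.b n \<le> Hs.b n"
    proof (intro exI allI impI)
      fix n :: nat assume n: "n \<ge> 1"
      have "0 \<le> (real p - 1) / (real p ^ n - 1)" using S.Pk[OF n] S.P1 by simp
      thus "S.b n \<le> Hs.b n" unfolding S.b_def Hs.b_def
        by (intro powr_mono2 t_nn spec_le_hs[OF titer_sym])
    qed
    ultimately have "lim S.b \<le> lim Hs.b" by (rule LIMSEQ_le)
    thus ?thesis by (simp add: rho3_def ft r2)
  qed
  have P6: "\<forall>k\<ge>1. \<forall>l\<ge>1.
         spec_norm (p ^ (k + l)) (titer p f (k + l))
           = spec_norm (p ^ k) (titer p f k) * spec_norm (p ^ l) (titer p f l) ^ (p ^ k)
         \<longleftrightarrow> (titer p f l = (\<lambda>_ _. 0)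
              \<or> (\<exists>xs::real^'n. norm xs = 1
                   \<and> norm ((tensor_map p f ^^ l) xs) = spec_norm (p ^ l) (titer p f l)
                   \<and> norm ((tensor_map p f ^^ k)
                        ((1 / spec_norm (p ^ l) (titer p f l)) *\<^sub>R (tensor_map p f ^^ l) xs))
                       = spec_norm (p ^ k) (titer p f k)))"
    using t_eq[where p=p and f=f] p2 by simp
  show ?thesis using P1 P2 P3 P4 P5 P6 by blast
qed


end
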